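(* Let $H(s):\mathbb{R}\mapsto\mathbb{C}^{N\times N}$ be differentiable on the domain $[0,t]$ and let $\langle\|\dot H\|\rangle:=\frac{1}{t}\int_0^t\left\|\frac{\mathrm{d}H(s)}{\mathrm{d}s}\right\|\mathrm{d}s$. Let $K\ge0$ be an integer and $\epsilon_2>0$. If $M$ is chosen such that 1. $M\ge\frac{t^2}{\epsilon_2}4e^{\max_s\|H(s)\|t}\left(\langle\|\dot H\|\rangle+\max_s\|H(s)\|^2\right)$, and 2. $M\ge K^2$, then $\left\|\sum_{k=0}^K(-i)^kD_k-\sum_{k=0}^K\left(-i\frac{t}{M}\right)^kB_k\right\|\le\epsilon_2$.
   Context: $\|\cdot\|$ is the spectral norm. $D_k=\frac{1}{k!}\int_0^t\cdots\int_0^t\mathcal{T}[H(t_1)\cdots H(t_k)]\mathrm{d}^kt$, where $\mathcal{T}$ reorders an operator product so that factors at later times stand to the left. With $\Delta=t/M$, $B_k=\sum_{0\le m_1<\cdots<m_k<M}H(m_k\Delta)\cdots H(m_1\Delta)$ (and $B_0=D_0$ the identity). *)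

theory Defs
  imports "HOL-Analysis.Analysis"
begin

definition snorm :: "complex^'n^'n \<Rightarrow> real" where
  "snorm A = onorm (\<lambda>x::complex^'n. A *v x)"

definition cscale :: "complex \<Rightarrow> complex^'n^'n \<Rightarrow> complex^'n^'n" where
  "cscale c A = (\<chi> i j. c * A $ i $ j)"

definition mprod :: "(complex^'n^'n) list \<Rightarrow> complex^'n^'n" where
  "mprod As = foldr (**) As (mat 1)"

text \<open>Time-ordered product T[H(x 0) ... H(x (k-1))]: factors at later times to the left.\<close>
definition time_ordered :: "(real \<Rightarrow> complex^'n^'n) \<Rightarrow> nat \<Rightarrow> (nat \<Rightarrow> real) \<Rightarrow> complex^'n^'n" where
  "time_ordered H k x = mprod (map H (rev (sort (map x [0..<k]))))"

definition Dk :: "(real \<Rightarrow> complex^'n^'n) \<Rightarrow> real \<Rightarrow> nat \<Rightarrow> complex^'n^'n" where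
  "Dk H t k = (1 / fact k) *\<^sub>R
     integral\<^sup>L (PiM {..<k} (\<lambda>_. restrict_space lborel {0..t})) (time_ordered H k)"

definition Bk :: "(real \<Rightarrow> complex^'n^'n) \<Rightarrow> real \<Rightarrow> nat \<Rightarrow> nat \<Rightarrow> complex^'n^'n" where
  "Bk H t M k = (\<Sum>S\<in>{S. S \<subseteq> {..<M} \<and> card S = k}.
      mprod (map (\<lambda>m. H (real m * (t / real M))) (rev (sorted_list_of_set S))))"

end

theory Submission
  imports Defs "HOL-Combinatorics.Multiset_Permutations"
begin




lemma snorm_bl: fixes A :: "complex^'n^'n" shows "bounded_linear (\<lambda>x::complex^'n. A *v x)"
  by simp

lemma snorm_ge0: fixes A B :: "complex^'n^'n" shows "0 \<le> snorm A"
  unfolding snorm_def by (rule onorm_pos_le) simp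

lemma snorm_vec: fixes A B :: "complex^'n^'n" shows "norm (A *v x) \<le> snorm A * norm x"
  unfolding snorm_def by (rule onorm) simp

lemma snorm_le: fixes A :: "complex^'n^'n" shows "0 \<le> b \<Longrightarrow> (\<And>x::complex^'n. norm (A *v x) \<le> b * norm x) \<Longrightarrow> snorm A \<le> b"
  unfolding snorm_def by (rule onorm_bound)

lemma snorm_add: fixes A B :: "complex^'n^'n" shows "snorm (A + B) \<le> snorm A + snorm B"
  by (intro snorm_le add_nonneg_nonneg snorm_ge0)
     (metis (no_types, lifting) add_mono distrib_right matrix_vector_mult_add_rdistrib norm_triangle_le snorm_vec)

lemma snorm_diff: fixes A B :: "complex^'n^'n" shows "snorm (A - B) \<le> snorm A + snorm B"
  by (intro snorm_le add_nonneg_nonneg snorm_ge0)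
     (smt (verit) distrib_right matrix_vector_mult_diff_rdistrib norm_triangle_ineq4 snorm_vec)

lemma snorm_mult: fixes A B :: "complex^'n^'n" shows "snorm (A ** B) \<le> snorm A * snorm B"
proof (intro snorm_le mult_nonneg_nonneg snorm_ge0)
  fix x :: "complex^'n"
  have "norm ((A ** B) *v x) = norm (A *v (B *v x))" by (simp add: matrix_vector_mul_assoc)
  also have "\<dots> \<le> snorm A * norm (B *v x)" by (rule snorm_vec)
  also have "\<dots> \<le> snorm A * (snorm B * norm x)" by (intro mult_left_mono snorm_vec snorm_ge0)
  finally show "norm ((A ** B) *v x) \<le> snorm A * snorm B * norm x" by simp
qed

lemma snorm_one: "snorm (mat 1 :: complex^'n^'n) \<le> 1"
  by (intro snorm_le) auto

lemma snorm_zero: "snorm (0 :: complex^'n^'n) = 0"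
  by (metis order_antisym snorm_ge0 snorm_le matrix_vector_mult_0 norm_zero mult_zero_left order_refl)

lemma cscale_vec: fixes A :: "complex^'n^'n" shows "cscale c A *v x = c *s (A *v x)"
  by (simp add: cscale_def matrix_vector_mult_def vec_eq_iff sum_distrib_left mult.assoc)

lemma snorm_cscale: fixes A :: "complex^'n^'n" shows "snorm (cscale c A) \<le> cmod c * snorm A"
proof (intro snorm_le mult_nonneg_nonneg snorm_ge0 norm_ge_zero)
  fix x :: "complex^'n"
  have "norm (cscale c A *v x) = cmod c * norm (A *v x)"
    by (simp add: cscale_vec norm_vec_def L2_set_def norm_mult power_mult_distrib sum_distrib_left[symmetric] real_sqrt_mult)
  also have "\<dots> \<le> cmod c * (snorm A * norm x)" by (intro mult_left_mono snorm_vec) auto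
  finally show "norm (cscale c A *v x) \<le> cmod c * snorm A * norm x" by simp
qed


lemma sort_map_mono:
  fixes f :: "'a::linorder \<Rightarrow> 'b::linorder"
  assumes "mono f"
  shows "sort (map f xs) = map f (sort xs)"
proof (rule properties_for_sort)
  show "mset (map f (sort xs)) = mset (map f xs)" by simp
  show "sorted (map f (sort xs))"
    using assms by (intro sorted_map_mono) (auto simp: mono_on_def monoD)
qed

lemma time_ordered_mono:
  assumes "mono f"
  shows "time_ordered H k (\<lambda>j. f (x j)) = mprod (map (H \<circ> f) (rev (sort (map x [0..<k]))))"
proof -
  have "map (\<lambda>j. f (x j)) [0..<k] = map f (map x [0..<k])" by simp
  then show ?thesis
    unfolding time_ordered_def using sort_map_mono[OF assms, of "map x [0..<k]"]
    by (simp add: rev_map o_def)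
qed

lemma sum_list_sort_rev:
  fixes \<phi> :: "'a::linorder \<Rightarrow> 'b::comm_monoid_add"
  shows "sum_list (map \<phi> (rev (sort (map x [0..<k])))) = (\<Sum>j<k. \<phi> (x j))"
proof -
  have "sum_list (map \<phi> (rev (sort (map x [0..<k])))) = sum_mset (image_mset \<phi> (mset (rev (sort (map x [0..<k])))))"
    by (simp only: sum_mset_sum_list[symmetric] mset_map)
  also have "\<dots> = sum_mset (image_mset \<phi> (mset (map x [0..<k])))" by simp
  also have "\<dots> = sum_list (map \<phi> (map x [0..<k]))"
    by (simp only: sum_mset_sum_list[symmetric] mset_map)
  also have "\<dots> = (\<Sum>j<k. \<phi> (x j))"
    by (simp add: sum_list_distinct_conv_sum_set atLeast0LessThan)
  finally show ?thesis .
qed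

lemma set_sort_rev: "set (rev (sort (map x [0..<k]))) = x ` {..<k}"
  by auto

lemma mprod_Cons: "mprod (a # L) = a ** mprod L"
  by (simp add: mprod_def)

lemma mprod_Nil: "mprod [] = mat 1"
  by (simp add: mprod_def)

lemma mm_sub_l: fixes A B C :: "complex^'n^'n" shows "A ** (B - C) = A ** B - A ** C"
  by (simp add: matrix_matrix_mult_def vec_eq_iff sum_subtractf algebra_simps)
lemma mm_sub_r: fixes A B C :: "complex^'n^'n" shows "(A - B) ** C = A ** C - B ** C"
  by (simp add: matrix_matrix_mult_def vec_eq_iff sum_subtractf algebra_simps)

lemma snorm_mprod:
  fixes f :: "'a \<Rightarrow> complex^'n^'n"
  assumes "\<And>y. y \<in> set L \<Longrightarrow> snorm (f y) \<le> h"
  shows "snorm (mprod (map f L)) \<le> h ^ length L"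
  using assms
proof (induction L)
  case Nil
  then show ?case using snorm_one by (simp add: mprod_Nil)
next
  case (Cons a L)
  have h0: "0 \<le> h" using Cons.prems[of a] snorm_ge0[of "f a"] by (meson list.set_intros(1) order_trans)
  have "snorm (mprod (map f (a # L))) \<le> snorm (f a) * snorm (mprod (map f L))"
    by (simp add: mprod_Cons snorm_mult)
  also have "\<dots> \<le> h * h ^ length L"
    using Cons h0 by (intro mult_mono snorm_ge0) auto
  finally show ?case by simp
qed

lemma snorm_mprod_diff:
  fixes f g :: "'a \<Rightarrow> complex^'n^'n"
  assumes "\<And>y. y \<in> set L \<Longrightarrow> snorm (f y) \<le> h"
    and "\<And>y. y \<in> set L \<Longrightarrow> snorm (g y) \<le> h" and "0 \<le> h"
  shows "snorm (mprod (map f L) - mprod (map g L)) \<le> h ^ (length L - 1) * sum_list (map (\<lambda>y. snorm (f y - g y)) L)"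
  using assms
proof (induction L)
  case Nil
  then show ?case by (simp add: snorm_zero)
next
  case (Cons a L)
  let ?P = "mprod (map f L)" and ?Q = "mprod (map g L)"
  have e: "mprod (map f (a # L)) - mprod (map g (a # L)) = (f a - g a) ** ?P + g a ** (?P - ?Q)"
    by (simp add: mprod_Cons mm_sub_l mm_sub_r)
  have "snorm (mprod (map f (a # L)) - mprod (map g (a # L))) = snorm ((f a - g a) ** ?P + g a ** (?P - ?Q))"
    by (simp only: e)
  also have "\<dots> \<le> snorm ((f a - g a) ** ?P) + snorm (g a ** (?P - ?Q))" by (rule snorm_add)
  also have "\<dots> \<le> snorm (f a - g a) * snorm ?P + snorm (g a) * snorm (?P - ?Q)"
    by (intro add_mono snorm_mult)
  also have "\<dots> \<le> snorm (f a - g a) * h ^ length L + h * (h ^ (length L - 1) * sum_list (map (\<lambda>y. snorm (f y - g y)) L))"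
    using Cons by (intro add_mono mult_mono snorm_ge0 snorm_mprod) auto
  also have "\<dots> = h ^ length L * (snorm (f a - g a) + sum_list (map (\<lambda>y. snorm (f y - g y)) L))"
  proof (cases L)
    case Nil
    then show ?thesis by simp
  next
    case (Cons b L')
    then show ?thesis by (simp add: algebra_simps)
  qed
  finally show ?case by simp
qed


definition Inj :: "nat \<Rightarrow> nat \<Rightarrow> (nat \<Rightarrow> nat) set" where
  "Inj k M = {m \<in> PiE {..<k} (\<lambda>_. {..<M}). inj_on m {..<k}}"

lemma finite_Inj: "finite (Inj k M)"
proof (rule finite_subset[of _ "PiE {..<k} (\<lambda>_. {..<M})"])
  show "Inj k M \<subseteq> PiE {..<k} (\<lambda>_. {..<M})" unfolding Inj_def by blast
  show "finite (PiE {..<k} (\<lambda>_. {..<M}))" by (intro finite_PiE) auto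
qed

lemma sort_inj:
  assumes "inj_on m {..<k}"
  shows "sort (map m [0..<k]) = sorted_list_of_set (m ` {..<k})"
proof -
  have d: "distinct (map m [0..<k])" using assms by (simp add: distinct_map atLeast0LessThan)
  have e: "m ` {..<k} = set (map m [0..<k])" by (auto simp: atLeast0LessThan)
  have "sorted_list_of_set (set (map m [0..<k])) = sort (map m [0..<k])"
    by (simp only: sorted_list_of_set_sort_remdups distinct_remdups_id[OF d])
  then show ?thesis by (simp only: e)
qed

lemma card_fiber:
  assumes S: "S \<subseteq> {..<M}" "card S = k"
  shows "card {m \<in> Inj k M. m ` {..<k} = S} = fact k"
proof -
  have fS: "finite S" using S finite_subset by blast
  have "bij_betw (\<lambda>m. map m [0..<k]) {m \<in> Inj k M. m ` {..<k} = S} (permutations_of_set S)"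
  proof (rule bij_betwI')
    fix m m' assume m: "m \<in> {m \<in> Inj k M. m ` {..<k} = S}" and m': "m' \<in> {m \<in> Inj k M. m ` {..<k} = S}"
    show "(map m [0..<k] = map m' [0..<k]) = (m = m')"
    proof
      assume eq: "map m [0..<k] = map m' [0..<k]"
      show "m = m'"
      proof
        fix i
        show "m i = m' i"
        proof (cases "i < k")
          case True then show ?thesis using eq by auto
        next
          case False then show ?thesis using m m' unfolding Inj_def by (auto simp: PiE_def extensional_def)
        qed
      qed
    qed simp
  next
    fix m assume m: "m \<in> {m \<in> Inj k M. m ` {..<k} = S}"
    then have "inj_on m {..<k}" by (simp add: Inj_def)
    then show "map m [0..<k] \<in> permutations_of_set S"
      using m by (auto simp: permutations_of_set_def distinct_map atLeast0LessThan)
  next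
    fix xs assume xs: "xs \<in> permutations_of_set S"
    then have sx: "set xs = S" "distinct xs" by (auto simp: permutations_of_set_def)
    have lx: "length xs = k" using distinct_card[OF sx(2)] sx(1) S(2) by simp
    define m where "m = (\<lambda>i. if i < k then xs ! i else undefined)"
    have mx: "map m [0..<k] = xs" by (rule nth_equalityI) (auto simp: m_def lx)
    have img: "m ` {..<k} = S"
    proof -
      have "m ` {..<k} = set (map m [0..<k])" by (auto simp: atLeast0LessThan)
      then show ?thesis using mx sx by simp
    qed
    have inj: "inj_on m {..<k}"
      using sx(2) lx by (auto simp: inj_on_def m_def nth_eq_iff_index_eq)
    have "m \<in> PiE {..<k} (\<lambda>_. {..<M})"
    proof (rule PiE_I)
      fix i assume "i \<in> {..<k}"
      then have "m i \<in> S" using img by blast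
      then show "m i \<in> {..<M}" using S(1) by blast
    next
      fix i assume "i \<notin> {..<k}" then show "m i = undefined" by (simp add: m_def)
    qed
    then show "\<exists>m\<in>{m \<in> Inj k M. m ` {..<k} = S}. xs = map m [0..<k]"
      using img inj mx by (auto simp: Inj_def)
  qed
  then have "card {m \<in> Inj k M. m ` {..<k} = S} = card (permutations_of_set S)"
    by (rule bij_betw_same_card)
  also have "\<dots> = fact k" using fS S by simp
  finally show ?thesis .
qed

lemma sum_Inj:
  fixes G :: "nat set \<Rightarrow> 'a::real_vector"
  shows "(\<Sum>m\<in>Inj k M. G (m ` {..<k})) = fact k *\<^sub>R (\<Sum>S\<in>{S. S \<subseteq> {..<M} \<and> card S = k}. G S)"
proof -
  let ?Sk = "{S. S \<subseteq> {..<M} \<and> card S = k}"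
  have fSk: "finite ?Sk" by (rule finite_subset[of _ "Pow {..<M}"]) auto
  have sub: "(\<lambda>m. m ` {..<k}) ` Inj k M \<subseteq> ?Sk"
  proof
    fix S assume "S \<in> (\<lambda>m. m ` {..<k}) ` Inj k M"
    then obtain m where m: "m \<in> Inj k M" and S: "S = m ` {..<k}" by blast
    have "m \<in> PiE {..<k} (\<lambda>_. {..<M})" "inj_on m {..<k}" using m by (auto simp: Inj_def)
    then have "S \<subseteq> {..<M}" "card S = k" using S by (auto simp: card_image PiE_mem)
    then show "S \<in> ?Sk" by simp
  qed
  have "(\<Sum>m\<in>Inj k M. G (m ` {..<k})) = (\<Sum>S\<in>?Sk. \<Sum>m\<in>{m \<in> Inj k M. m ` {..<k} = S}. G (m ` {..<k}))"
    by (rule sum.group[symmetric, OF finite_Inj fSk sub])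
  also have "\<dots> = (\<Sum>S\<in>?Sk. \<Sum>m\<in>{m \<in> Inj k M. m ` {..<k} = S}. G S)"
    by (intro sum.cong) auto
  also have "\<dots> = (\<Sum>S\<in>?Sk. fact k *\<^sub>R G S)"
    by (intro sum.cong refl) (simp add: card_fiber sum_constant_scaleR)
  finally show ?thesis by (simp add: scaleR_sum_right)
qed

lemma Bk_Inj:
  assumes "0 \<le> t"
  shows "(\<Sum>m\<in>Inj k M. time_ordered H k (\<lambda>j. real (m j) * (t / real M))) = fact k *\<^sub>R Bk H t M k"
proof -
  have mono: "mono (\<lambda>m::nat. real m * (t / real M))"
    using assms by (intro monoI mult_right_mono) auto
  have "(\<Sum>m\<in>Inj k M. time_ordered H k (\<lambda>j. real (m j) * (t / real M)))
     = (\<Sum>m\<in>Inj k M. mprod (map (\<lambda>m. H (real m * (t / real M))) (rev (sorted_list_of_set (m ` {..<k})))))"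
  proof (intro sum.cong refl)
    fix m assume "m \<in> Inj k M"
    then have "inj_on m {..<k}" by (simp add: Inj_def)
    then show "time_ordered H k (\<lambda>j. real (m j) * (t / real M)) = mprod (map (\<lambda>m. H (real m * (t / real M))) (rev (sorted_list_of_set (m ` {..<k}))))"
      by (simp only: time_ordered_mono[OF mono, of H k m] sort_inj[OF \<open>inj_on m {..<k}\<close>] comp_def)
  qed
  also have "\<dots> = fact k *\<^sub>R Bk H t M k"
    unfolding Bk_def by (rule sum_Inj)
  finally show ?thesis .
qed

lemma card_pair_le:
  assumes "i < k" "j < k" "i \<noteq> j"
  shows "card {m \<in> PiE {..<k} (\<lambda>_. {..<M::nat}). m i = m j} \<le> M ^ (k - 1)"
proof -
  have "card {m \<in> PiE {..<k} (\<lambda>_. {..<M::nat}). m i = m j} \<le> card (PiE ({..<k} - {j}) (\<lambda>_. {..<M}))"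
  proof (rule card_inj_on_le[where f = "\<lambda>m. restrict m ({..<k} - {j})"])
    show "inj_on (\<lambda>m. restrict m ({..<k} - {j})) {m \<in> PiE {..<k} (\<lambda>_. {..<M::nat}). m i = m j}"
    proof (rule inj_onI)
      fix m m' assume m: "m \<in> {m \<in> PiE {..<k} (\<lambda>_. {..<M::nat}). m i = m j}" and m': "m' \<in> {m \<in> PiE {..<k} (\<lambda>_. {..<M::nat}). m i = m j}"
        and eq: "restrict m ({..<k} - {j}) = restrict m' ({..<k} - {j})"
      have eqi: "\<And>l. l < k \<Longrightarrow> l \<noteq> j \<Longrightarrow> m l = m' l" using eq by (metis restrict_apply' DiffI lessThan_iff singletonD)
      show "m = m'"
      proof
        fix l show "m l = m' l"
        proof -
          consider "l < k \<and> l \<noteq> j" | "l = j" | "\<not> l < k" by blast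
          then show ?thesis
          proof cases
            case 1 then show ?thesis using eqi by blast
          next
            case 2 then show ?thesis using m m' eqi[of i] assms by auto
          next
            case 3 then show ?thesis using m m' by (auto simp: PiE_def extensional_def)
          qed
        qed
      qed
    qed
    show "(\<lambda>m. restrict m ({..<k} - {j})) ` {m \<in> PiE {..<k} (\<lambda>_. {..<M::nat}). m i = m j} \<subseteq> PiE ({..<k} - {j}) (\<lambda>_. {..<M})"
      by (auto simp: PiE_def Pi_def)
    show "finite (PiE ({..<k} - {j}) (\<lambda>_. {..<M}))" by (intro finite_PiE) auto
  qed
  also have "\<dots> = M ^ (k - 1)" using assms by (simp add: card_PiE)
  finally show ?thesis .
qed

lemma sum_lessThan_real: "(\<Sum>j<k. real j) = real k * (real k - 1) / 2"
  by (induction k) (auto simp: field_simps)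

lemma card_noninj:
  "real (card (PiE {..<k} (\<lambda>_. {..<M}) - Inj k M)) \<le> real k * (real k - 1) / 2 * real M ^ (k - 1)"
proof -
  let ?A = "\<lambda>i j. {m \<in> PiE {..<k} (\<lambda>_. {..<M::nat}). m i = m j}"
  have sub: "PiE {..<k} (\<lambda>_. {..<M}) - Inj k M \<subseteq> (\<Union>j<k. \<Union>i<j. ?A i j)"
  proof
    fix m assume m: "m \<in> PiE {..<k} (\<lambda>_. {..<M}) - Inj k M"
    then have mP: "m \<in> PiE {..<k} (\<lambda>_. {..<M})" and ni: "\<not> inj_on m {..<k}" by (auto simp: Inj_def)
    then obtain a b where ab: "a < k" "b < k" "a \<noteq> b" "m a = m b" by (auto simp: inj_on_def)
    show "m \<in> (\<Union>j<k. \<Union>i<j. ?A i j)"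
    proof (cases "a < b")
      case True
      have mA: "m \<in> ?A a b" using ab mP by simp
      show ?thesis using True ab(2) mA by blast
    next
      case False then have ba: "b < a" using ab by simp
      have mA: "m \<in> ?A b a" using ab mP by simp
      show ?thesis using ba ab(1) mA by blast
    qed
  qed
  have "card (PiE {..<k} (\<lambda>_. {..<M}) - Inj k M) \<le> card (\<Union>j<k. \<Union>i<j. ?A i j)"
  proof (rule card_mono[OF _ sub])
    have fin: "finite (PiE {..<k} (\<lambda>_. {..<M::nat}))" by (intro finite_PiE) auto
    show "finite (\<Union>j<k. \<Union>i<j. ?A i j)" by (rule finite_subset[OF _ fin]) blast
  qed
  also have "\<dots> \<le> (\<Sum>j<k. card (\<Union>i<j. ?A i j))" by (rule card_UN_le) simp
  also have "\<dots> \<le> (\<Sum>j<k. \<Sum>i<j. card (?A i j))" by (intro sum_mono card_UN_le) simp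
  also have "\<dots> \<le> (\<Sum>j<k. \<Sum>i<j. M ^ (k - 1))" by (intro sum_mono card_pair_le) auto
  also have "\<dots> = (\<Sum>j<k. j) * M ^ (k - 1)" by (simp add: sum_distrib_right)
  finally have "card (PiE {..<k} (\<lambda>_. {..<M}) - Inj k M) \<le> (\<Sum>j<k. j) * M ^ (k - 1)" .
  then have "real (card (PiE {..<k} (\<lambda>_. {..<M}) - Inj k M)) \<le> real ((\<Sum>j<k. j) * M ^ (k - 1))"
    by (rule of_nat_mono)
  also have "\<dots> = (\<Sum>j<k. real j) * real M ^ (k - 1)" by (simp only: of_nat_mult of_nat_sum of_nat_power)
  finally show ?thesis by (simp only: sum_lessThan_real)
qed


lemma mv_axis: fixes A :: "complex^'n^'n" shows "(A *v axis j 1) $ i = A $ i $ j"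
  by (simp add: matrix_vector_mult_def axis_def if_distrib cong: if_cong)

lemma norm_axis_c: "norm (axis j (1::complex) :: complex^'n) = 1"
proof -
  have e: "(\<lambda>i. (norm ((axis j 1::complex^'n)$i))^2) = (\<lambda>i. if i = j then 1 else 0)"
    by (auto simp: axis_def)
  show ?thesis unfolding norm_vec_def L2_set_def e by simp
qed

lemma norm_le_snorm: fixes A :: "complex^'n^'n"
  shows "norm A \<le> real CARD('n)^2 * snorm A"
proof -
  have c: "norm (A $ i $ j) \<le> snorm A" for i j
  proof -
    have "norm (A $ i $ j) = norm ((A *v axis j 1) $ i)" by (simp add: mv_axis)
    also have "\<dots> \<le> norm (A *v axis j 1)" by (rule Finite_Cartesian_Product.norm_nth_le)
    also have "\<dots> \<le> snorm A * norm (axis j (1::complex))" by (rule snorm_vec)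
    also have "\<dots> = snorm A" by (simp add: norm_axis_c)
    finally show ?thesis .
  qed
  have r: "norm (A $ i) \<le> real CARD('n) * snorm A" for i
  proof -
    have "norm (A $ i) \<le> (\<Sum>j\<in>UNIV. norm (A $ i $ j))"
      unfolding norm_vec_def by (rule L2_set_le_sum) simp
    also have "\<dots> \<le> (\<Sum>j\<in>(UNIV::'n set). snorm A)" by (intro sum_mono c)
    finally show ?thesis by simp
  qed
  have "norm A \<le> (\<Sum>i\<in>UNIV. norm (A $ i))"
    unfolding norm_vec_def by (rule L2_set_le_sum) simp
  also have "\<dots> \<le> (\<Sum>i\<in>(UNIV::'n set). real CARD('n) * snorm A)" by (intro sum_mono r)
  finally show ?thesis by (simp add: power2_eq_square)
qed

lemma norm_mv_le: fixes A :: "complex^'n^'n"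
  shows "norm (A *v x) \<le> real CARD('n)^2 * norm A * norm x"
proof -
  have c: "norm ((A *v x) $ i) \<le> real CARD('n) * (norm A * norm x)" for i
  proof -
    have "norm ((A *v x) $ i) = norm (\<Sum>j\<in>UNIV. A $ i $ j * x $ j)" by (simp add: matrix_vector_mult_def)
    also have "\<dots> \<le> (\<Sum>j\<in>UNIV. norm (A $ i $ j * x $ j))" by (rule norm_sum)
    also have "\<dots> \<le> (\<Sum>j\<in>(UNIV::'n set). norm A * norm x)"
    proof (intro sum_mono)
      fix j
      have "norm (A $ i $ j) \<le> norm A" by (meson Finite_Cartesian_Product.norm_nth_le order_trans)
      moreover have "norm (x $ j) \<le> norm x" by (rule Finite_Cartesian_Product.norm_nth_le)
      ultimately show "norm (A $ i $ j * x $ j) \<le> norm A * norm x"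
        by (simp add: norm_mult mult_mono)
    qed
    finally show ?thesis by simp
  qed
  have "norm (A *v x) \<le> (\<Sum>i\<in>UNIV. norm ((A *v x) $ i))"
    unfolding norm_vec_def by (rule L2_set_le_sum) simp
  also have "\<dots> \<le> (\<Sum>i\<in>(UNIV::'n set). real CARD('n) * (norm A * norm x))" by (intro sum_mono c)
  finally show ?thesis by (simp add: power2_eq_square mult.assoc)
qed

lemma snorm_le_norm: fixes A :: "complex^'n^'n"
  shows "snorm A \<le> real CARD('n)^2 * norm A"
  by (rule snorm_le) (auto simp: norm_mv_le)

lemma bl_mv: "bounded_linear (\<lambda>A::complex^'n^'n. A *v v)"
proof (rule bounded_linear_intro[where K = "real CARD('n)^2 * norm v"])
  show "(A + B) *v v = A *v v + B *v v" for A B :: "complex^'n^'n" by (simp add: matrix_vector_mult_add_rdistrib)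
  show "(r *\<^sub>R A) *v v = r *\<^sub>R (A *v v)" for r and A :: "complex^'n^'n"
    by (simp add: matrix_vector_mult_def vec_eq_iff scaleR_sum_right)
  show "norm (A *v v) \<le> norm A * (real CARD('n)^2 * norm v)" for A :: "complex^'n^'n"
    using norm_mv_le[of A v] by (simp add: mult_ac)
qed

lemma snorm_sum: fixes f :: "'a \<Rightarrow> complex^'n^'n"
  shows "snorm (sum f F) \<le> (\<Sum>i\<in>F. snorm (f i))"
proof (induction F rule: infinite_finite_induct)
  case (infinite A) then show ?case by (simp add: snorm_zero)
next
  case empty then show ?case by (simp add: snorm_zero)
next
  case (insert x F)
  then show ?case using snorm_add[of "f x" "sum f F"] by simp
qed

lemma cscale_real: fixes A :: "complex^'n^'n" shows "cscale (complex_of_real r) A = r *\<^sub>R A"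
proof -
  have "\<forall>i j. (cscale (of_real r) A)$i$j = (r *\<^sub>R A)$i$j" by (simp add: cscale_def) (simp add: scaleR_conv_of_real)
  then show ?thesis by (simp add: vec_eq_iff)
qed

lemma snorm_scaleR: fixes A :: "complex^'n^'n" shows "snorm (r *\<^sub>R A) \<le> \<bar>r\<bar> * snorm A"
  using snorm_cscale[of "complex_of_real r" A] by (simp add: cscale_real)

lemma snorm_integral_le:
  fixes f :: "'a \<Rightarrow> complex^'n^'n"
  assumes f: "integrable M f" and g: "integrable M g" and le: "\<And>x. x \<in> space M \<Longrightarrow> snorm (f x) \<le> g x"
  shows "snorm (integral\<^sup>L M f) \<le> integral\<^sup>L M g"
proof (rule snorm_le)
  show "0 \<le> integral\<^sup>L M g"
    by (intro integral_nonneg_AE AE_I2) (metis le snorm_ge0 order_trans)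
  fix v :: "complex^'n"
  have "integral\<^sup>L M f *v v = integral\<^sup>L M (\<lambda>x. f x *v v)"
    using integral_bounded_linear[OF bl_mv f, of v] by simp
  then have "norm (integral\<^sup>L M f *v v) = norm (integral\<^sup>L M (\<lambda>x. f x *v v))" by simp
  also have "\<dots> \<le> integral\<^sup>L M (\<lambda>x. norm (f x *v v))" by (rule integral_norm_bound)
  also have "\<dots> \<le> integral\<^sup>L M (\<lambda>x. g x * norm v)"
  proof (rule integral_mono)
    show "integrable M (\<lambda>x. norm (f x *v v))"
      by (intro integrable_norm integrable_bounded_linear[OF bl_mv f])
    show "integrable M (\<lambda>x. g x * norm v)" using g by simp
    fix x assume "x \<in> space M"
    then show "norm (f x *v v) \<le> g x * norm v"
      using le snorm_vec[of "f x" v] by (meson mult_right_mono norm_ge_zero order_trans)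
  qed
  also have "\<dots> = integral\<^sup>L M g * norm v" by simp
  finally show "norm (integral\<^sup>L M f *v v) \<le> integral\<^sup>L M g * norm v" .
qed

lemma tendsto_mm:
  fixes f g :: "'a \<Rightarrow> complex^'n^'n"
  assumes "(f \<longlongrightarrow> a) F" "(g \<longlongrightarrow> b) F"
  shows "((\<lambda>x. f x ** g x) \<longlongrightarrow> a ** b) F"
  unfolding matrix_matrix_mult_def
  by (intro vec_tendstoI) (simp add: tendsto_intros assms)

lemma tendsto_mprod:
  fixes f :: "'b \<Rightarrow> 'a \<Rightarrow> complex^'n^'n"
  assumes "\<And>y. y \<in> set L \<Longrightarrow> ((\<lambda>n. f n y) \<longlongrightarrow> g y) F"
  shows "((\<lambda>n. mprod (map (f n) L)) \<longlongrightarrow> mprod (map g L)) F"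
  using assms
proof (induction L)
  case Nil then show ?case by (simp add: mprod_Nil)
next
  case (Cons a L)
  then show ?case by (simp add: mprod_Cons tendsto_mm)
qed

lemma sum_exp_le: assumes "0 \<le> (x::real)" shows "(\<Sum>j<n. x^j / fact j) \<le> exp x"
proof -
  have s: "(\<lambda>j. x^j / fact j) sums exp x" using exp_converges[of x] by (simp add: divide_inverse_commute)
  have "(\<Sum>j<n. x^j / fact j) \<le> suminf (\<lambda>j. x^j / fact j)"
    by (rule sum_le_suminf) (use s assms in \<open>auto simp: sums_iff\<close>)
  also have "\<dots> = exp x" using s by (simp add: sums_iff)
  finally show ?thesis .
qed


definition idx :: "real \<Rightarrow> nat \<Rightarrow> real \<Rightarrow> nat" where
  "idx t M s = min (nat \<lfloor>s / (t / real M)\<rfloor>) (M - 1)"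

definition cf :: "real \<Rightarrow> nat \<Rightarrow> real \<Rightarrow> real" where
  "cf t M s = real (idx t M s) * (t / real M)"

definition cell :: "real \<Rightarrow> nat \<Rightarrow> nat \<Rightarrow> real set" where
  "cell t M m = {s \<in> {0..t}. idx t M s = m}"

abbreviation Mt :: "real \<Rightarrow> real measure" where
  "Mt t \<equiv> restrict_space lborel {0..t}"

abbreviation PP :: "real \<Rightarrow> nat \<Rightarrow> (nat \<Rightarrow> real) measure" where
  "PP t k \<equiv> PiM {..<k} (\<lambda>_. Mt t)"

lemma mono_idx: assumes "0 < t" shows "mono (idx t M)"
  unfolding idx_def
proof (rule monoI)
  fix x y :: real assume "x \<le> y"
  then have "x / (t / real M) \<le> y / (t / real M)"
    using assms by (intro divide_right_mono) auto
  then have "nat \<lfloor>x / (t / real M)\<rfloor> \<le> nat \<lfloor>y / (t / real M)\<rfloor>"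
    by (intro nat_mono floor_mono)
  then show "min (nat \<lfloor>x / (t / real M)\<rfloor>) (M - 1) \<le> min (nat \<lfloor>y / (t / real M)\<rfloor>) (M - 1)"
    by simp
qed

lemma mono_cf: assumes "0 < t" shows "mono (cf t M)"
  unfolding cf_def using mono_idx[OF assms, of M] assms
  by (intro monoI mult_right_mono) (auto simp: monoD)

lemma idx_bounds:
  assumes t: "0 < t" and M: "0 < M" and s: "s \<in> {0..t}"
  shows "idx t M s < M" "real (idx t M s) * (t / real M) \<le> s" "s \<le> real (Suc (idx t M s)) * (t / real M)"
proof -
  let ?D = "t / real M"
  have D: "0 < ?D" using t M by simp
  let ?q = "s / ?D"
  have q0: "0 \<le> ?q" using s D by simp
  have qM: "?q \<le> real M" using s t M by (simp add: field_simps)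
  let ?n = "nat \<lfloor>?q\<rfloor>"
  have n1: "real ?n \<le> ?q" using q0 by linarith
  have n2: "?q < real ?n + 1" using q0 by linarith
  have sq: "s = ?q * ?D" using t M by simp
  show "idx t M s < M" unfolding idx_def using M by simp
  have "real (idx t M s) \<le> real ?n" unfolding idx_def by simp
  then have "real (idx t M s) * ?D \<le> real ?n * ?D" using D by (intro mult_right_mono) auto
  also have "\<dots> \<le> ?q * ?D" using n1 D by (intro mult_right_mono) auto
  finally show "real (idx t M s) * ?D \<le> s" using sq by simp
  show "s \<le> real (Suc (idx t M s)) * ?D"
  proof (cases "?n \<le> M - 1")
    case True
    then have "idx t M s = ?n" unfolding idx_def by simp
    then have "real (Suc (idx t M s)) = real ?n + 1" by simp
    then have "real (Suc (idx t M s)) * ?D \<ge> ?q * ?D" using n2 D by (intro mult_right_mono) auto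
    then show ?thesis using sq by simp
  next
    case False
    then have "idx t M s = M - 1" unfolding idx_def by simp
    then have "real (Suc (idx t M s)) = real M" using M by simp
    then have "real (Suc (idx t M s)) * ?D \<ge> ?q * ?D" using qM D by (intro mult_right_mono) auto
    then show ?thesis using sq by simp
  qed
qed

lemma cf_props:
  assumes t: "0 < t" and M: "0 < M" and s: "s \<in> {0..t}"
  shows "cf t M s \<in> {0..t}" "cf t M s \<le> s" "s - cf t M s \<le> t / real M"
proof -
  note b = idx_bounds[OF t M s]
  show "cf t M s \<le> s" using b(2) by (simp add: cf_def)
  then show "cf t M s \<in> {0..t}" using s t M by (auto simp: cf_def)
  show "s - cf t M s \<le> t / real M" using b(3) by (simp add: cf_def algebra_simps)
qed

lemma cell_eq:
  assumes t: "0 < t" and M: "0 < M" and m: "m < M"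
  shows "cell t M m = (if m = M - 1 then {real m * (t / real M) .. t} else {real m * (t / real M) ..< real (Suc m) * (t / real M)})"
proof -
  let ?D = "t / real M"
  have D: "0 < ?D" using t M by simp
  have tD: "t = real M * ?D" using M by simp
  have key: "idx t M s = m \<longleftrightarrow> real m * ?D \<le> s \<and> (s < real (Suc m) * ?D \<or> m = M - 1)" if s: "s \<in> {0..t}" for s
  proof -
    let ?q = "s / ?D"
    let ?n = "nat \<lfloor>?q\<rfloor>"
    have q0: "0 \<le> ?q" using s D by simp
    have n1: "real ?n \<le> ?q" using q0 by linarith
    have n2: "?q < real ?n + 1" using q0 by linarith
    have sq: "s = ?q * ?D" using t M by simp
    show ?thesis
    proof
      assume i: "idx t M s = m"
      have "real m * ?D \<le> s" using idx_bounds(2)[OF t M s] i by simp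
      moreover have "s < real (Suc m) * ?D \<or> m = M - 1"
      proof (cases "m = M - 1")
        case False
        then have "?n = m" using i unfolding idx_def by (auto simp: min_def split: if_splits)
        then have "?q < real (Suc m)" using n2 by simp
        then have "?q * ?D < real (Suc m) * ?D" using D by (intro mult_strict_right_mono) auto
        then show ?thesis using sq by simp
      qed simp
      ultimately show "real m * ?D \<le> s \<and> (s < real (Suc m) * ?D \<or> m = M - 1)" by blast
    next
      assume a: "real m * ?D \<le> s \<and> (s < real (Suc m) * ?D \<or> m = M - 1)"
      have "real m * ?D \<le> s" using a by blast
      then have "real m \<le> ?q" by (rule pos_le_divide_eq[OF D, THEN iffD2])
      then have "of_int (int m) \<le> ?q" by simp
      then have "int m \<le> \<lfloor>?q\<rfloor>" by (rule le_floor_iff[THEN iffD2])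
      then have mn: "m \<le> ?n" by (simp add: le_nat_iff)
      show "idx t M s = m"
      proof (cases "m = M - 1")
        case True then show ?thesis using mn unfolding idx_def by simp
      next
        case False
        then have "s < real (Suc m) * ?D" using a by blast
        then have "?q < real (Suc m)" by (rule pos_divide_less_eq[OF D, THEN iffD2])
        then have "?q < of_int (int (Suc m))" by simp
        then have "\<lfloor>?q\<rfloor> < int (Suc m)" by (rule floor_less_iff[THEN iffD2])
        then have "?n \<le> m" by simp
        then show ?thesis using mn m unfolding idx_def by simp
      qed
    qed
  qed
  have le1: "real (Suc m) * ?D \<le> real M * ?D" using m D by (intro mult_right_mono) auto
  have le: "real (Suc m) * ?D \<le> t" using le1 tD by linarith
  have ge: "0 \<le> real m * ?D" using D by (intro mult_nonneg_nonneg) auto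
  show ?thesis
  proof (cases "m = M - 1")
    case True
    have "s \<in> cell t M m \<longleftrightarrow> s \<in> {real m * ?D .. t}" for s
    proof
      assume "s \<in> cell t M m"
      then have s01: "s \<in> {0..t}" and "idx t M s = m" by (auto simp: cell_def)
      then show "s \<in> {real m * ?D .. t}" using key[OF s01] by auto
    next
      assume h: "s \<in> {real m * ?D .. t}"
      then have s01: "s \<in> {0..t}" using ge by auto
      then have "idx t M s = m" using key[OF s01] h True by auto
      then show "s \<in> cell t M m" using s01 by (simp add: cell_def)
    qed
    then have "cell t M m = {real m * ?D .. t}" by blast
    then show ?thesis using True by simp
  next
    case False
    have "s \<in> cell t M m \<longleftrightarrow> s \<in> {real m * ?D ..< real (Suc m) * ?D}" for s
    proof
      assume "s \<in> cell t M m"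
      then have s01: "s \<in> {0..t}" and "idx t M s = m" by (auto simp: cell_def)
      then show "s \<in> {real m * ?D ..< real (Suc m) * ?D}" using key[OF s01] False by auto
    next
      assume h: "s \<in> {real m * ?D ..< real (Suc m) * ?D}"
      then have s01: "s \<in> {0..t}" using ge le by auto
      then have "idx t M s = m" using key[OF s01] h by auto
      then show "s \<in> cell t M m" using s01 by (simp add: cell_def)
    qed
    then have "cell t M m = {real m * ?D ..< real (Suc m) * ?D}" by blast
    then show ?thesis using False by simp
  qed
qed

lemma cell_empty: assumes "0 < t" "0 < M" "\<not> m < M" shows "cell t M m = {}"
  using idx_bounds(1)[OF assms(1,2)] assms(3) unfolding cell_def by auto

lemma cell_sub: "cell t M m \<subseteq> {0..t}"
  unfolding cell_def by auto

lemma cell_borel: assumes "0 < t" "0 < M" shows "cell t M m \<in> sets borel"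
  using cell_eq[OF assms, of m] cell_empty[OF assms, of m] by (cases "m < M") auto

lemma cell_sets: assumes "0 < t" "0 < M" shows "cell t M m \<in> sets (Mt t)"
  using cell_borel[OF assms] cell_sub by (simp add: sets_restrict_space_iff)

lemma cell_emeasure: assumes t: "0 < t" and M: "0 < M" and m: "m < M"
  shows "emeasure (Mt t) (cell t M m) = ennreal (t / real M)"
proof -
  let ?D = "t / real M"
  have D: "0 < ?D" using t M by simp
  have "emeasure (Mt t) (cell t M m) = emeasure lborel (cell t M m)"
    by (rule emeasure_restrict_space) (auto simp: cell_sub)
  also have "\<dots> = ennreal ?D"
  proof (cases "m = M - 1")
    case True
    have e: "t - real m * ?D = ?D" using True M by (simp add: field_simps of_nat_diff)
    have "real m * ?D \<le> t" using e D by linarith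
    then show ?thesis using cell_eq[OF t M m] True e by simp
  next
    case False
    have "real (Suc m) * ?D - real m * ?D = (real (Suc m) - real m) * ?D" by (rule left_diff_distrib[symmetric])
    then have e: "real (Suc m) * ?D - real m * ?D = ?D" by simp
    have "real m * ?D \<le> real (Suc m) * ?D" using D by (intro mult_right_mono) auto
    then show ?thesis using cell_eq[OF t M m] False e by simp
  qed
  finally show ?thesis .
qed

lemma space_Mt [simp]: "space (Mt t) = {0..t}"
  by (simp add: space_restrict_space)

lemma emeasure_Mt_space: assumes "0 \<le> t" shows "emeasure (Mt t) {0..t} = ennreal t"
  using assms by (subst emeasure_restrict_space) auto

lemma finite_measure_Mt: assumes "0 \<le> t" shows "finite_measure (Mt t)"
  by (rule finite_measureI) (use emeasure_Mt_space[OF assms] in simp)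

lemma psf_Mt: assumes "0 \<le> t" shows "product_sigma_finite (\<lambda>_::nat. Mt t)"
proof -
  interpret finite_measure "Mt t" by (rule finite_measure_Mt[OF assms])
  show ?thesis by unfold_locales
qed

lemma space_PP: "space (PP t k) = PiE {..<k} (\<lambda>_. {0..t})"
  by (simp add: space_PiM)

lemma emeasure_PP:
  assumes "0 \<le> t" and "\<And>i. i < k \<Longrightarrow> A i \<in> sets (Mt t)"
  shows "emeasure (PP t k) (PiE {..<k} A) = (\<Prod>i<k. emeasure (Mt t) (A i))"
proof -
  interpret product_sigma_finite "\<lambda>_::nat. Mt t" by (rule psf_Mt[OF assms(1)])
  show ?thesis using assms(2) by (intro emeasure_PiM) auto
qed

lemma finite_measure_PP: assumes "0 \<le> t" shows "finite_measure (PP t k)"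
proof (rule finite_measureI)
  have "emeasure (PP t k) (space (PP t k)) = (\<Prod>i<k. emeasure (Mt t) {0..t})"
    unfolding space_PP by (rule emeasure_PP[OF assms]) (auto simp: sets_restrict_space_iff)
  also have "\<dots> = (\<Prod>i<k. ennreal t)" using emeasure_Mt_space[OF assms] by simp
  also have "\<dots> = ennreal (\<Prod>i<k. t)" by (rule prod_ennreal) (use assms in auto)
  finally show "emeasure (PP t k) (space (PP t k)) \<noteq> \<infinity>" by simp
qed


definition bx :: "real \<Rightarrow> nat \<Rightarrow> nat \<Rightarrow> (nat \<Rightarrow> nat) \<Rightarrow> (nat \<Rightarrow> real) set" where
  "bx t M k m = PiE {..<k} (\<lambda>j. cell t M (m j))"

definition ridx :: "real \<Rightarrow> nat \<Rightarrow> nat \<Rightarrow> (nat \<Rightarrow> real) \<Rightarrow> (nat \<Rightarrow> nat)" where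
  "ridx t M k x = restrict (\<lambda>j. idx t M (x j)) {..<k}"

lemma bx_sets: assumes "0 < t" "0 < M" shows "bx t M k m \<in> sets (PP t k)"
  unfolding bx_def by (intro sets_PiM_I_finite cell_sets[OF assms]) auto

lemma bx_sub: "bx t M k m \<subseteq> space (PP t k)"
  unfolding bx_def space_PP by (rule PiE_mono) (use cell_sub in blast)

lemma bx_emeasure: assumes t: "0 < t" and M: "0 < M" and m: "m \<in> PiE {..<k} (\<lambda>_. {..<M})"
  shows "emeasure (PP t k) (bx t M k m) = ennreal ((t / real M) ^ k)"
proof -
  have "emeasure (PP t k) (bx t M k m) = (\<Prod>i<k. emeasure (Mt t) (cell t M (m i)))"
    unfolding bx_def using t by (intro emeasure_PP cell_sets[OF t M]) auto
  also have "\<dots> = (\<Prod>i<k. ennreal (t / real M))"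
    using m by (intro prod.cong refl cell_emeasure[OF t M]) (auto simp: PiE_def Pi_def)
  also have "\<dots> = ennreal (\<Prod>i<k. t / real M)" by (rule prod_ennreal) (use t in auto)
  finally show ?thesis by simp
qed

lemma bx_measure: assumes t: "0 < t" and M: "0 < M" and m: "m \<in> PiE {..<k} (\<lambda>_. {..<M})"
  shows "measure (PP t k) (bx t M k m) = (t / real M) ^ k"
  using bx_emeasure[OF assms] t by (simp add: measure_def)

lemma ridx_in: assumes t: "0 < t" and M: "0 < M" and x: "x \<in> space (PP t k)"
  shows "ridx t M k x \<in> PiE {..<k} (\<lambda>_. {..<M})"
  using x idx_bounds(1)[OF t M] unfolding ridx_def space_PP by (auto simp: PiE_def Pi_def)

lemma in_bx_iff: assumes t: "0 < t" and M: "0 < M" and x: "x \<in> space (PP t k)"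
    and m: "m \<in> PiE {..<k} (\<lambda>_. {..<M})"
  shows "x \<in> bx t M k m \<longleftrightarrow> m = ridx t M k x"
proof
  assume "x \<in> bx t M k m"
  then have "\<And>j. j < k \<Longrightarrow> idx t M (x j) = m j" unfolding bx_def cell_def by (auto simp: PiE_def Pi_def)
  then show "m = ridx t M k x" using m unfolding ridx_def by (auto simp: PiE_def extensional_def)
next
  assume e: "m = ridx t M k x"
  show "x \<in> bx t M k m" unfolding bx_def
  proof (rule PiE_I)
    fix j assume "j \<in> {..<k}"
    then show "x j \<in> cell t M (m j)" using x e unfolding ridx_def cell_def space_PP by (auto simp: PiE_def Pi_def)
  next
    fix j assume "j \<notin> {..<k}"
    then show "x j = undefined" using x unfolding space_PP by (auto simp: PiE_def extensional_def)
  qed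
qed

lemma step_sum:
  fixes F :: "(nat \<Rightarrow> nat) \<Rightarrow> 'a::real_vector"
  assumes t: "0 < t" and M: "0 < M" and x: "x \<in> space (PP t k)"
  shows "(\<Sum>m\<in>PiE {..<k} (\<lambda>_. {..<M}). indicator (bx t M k m) x *\<^sub>R F m) = F (ridx t M k x)"
proof -
  have "(\<Sum>m\<in>PiE {..<k} (\<lambda>_. {..<M}). indicator (bx t M k m) x *\<^sub>R F m)
      = (\<Sum>m\<in>PiE {..<k} (\<lambda>_. {..<M}). if m = ridx t M k x then F m else 0)"
    by (intro sum.cong refl) (simp add: in_bx_iff[OF t M x] indicator_def)
  also have "\<dots> = F (ridx t M k x)"
    using ridx_in[OF t M x] by (simp add: sum.delta' finite_PiE)
  finally show ?thesis .
qed

lemma step_integrable: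
  fixes F :: "(nat \<Rightarrow> nat) \<Rightarrow> 'a::{banach,second_countable_topology}"
  assumes t: "0 < t" and M: "0 < M"
  shows "integrable (PP t k) (\<lambda>x. \<Sum>m\<in>PiE {..<k} (\<lambda>_. {..<M}). indicator (bx t M k m) x *\<^sub>R F m)"
proof (rule Bochner_Integration.integrable_sum, rule integrable_scaleR_left, rule integrable_real_indicator)
  fix m assume "m \<in> PiE {..<k} (\<lambda>_. {..<M})"
  show "bx t M k m \<in> sets (PP t k)" by (rule bx_sets[OF t M])
  show "emeasure (PP t k) (bx t M k m) < \<infinity>" using bx_emeasure[OF t M \<open>m \<in> _\<close>] by simp
qed

lemma step_integral:
  fixes F :: "(nat \<Rightarrow> nat) \<Rightarrow> 'a::{banach,second_countable_topology}"
  assumes t: "0 < t" and M: "0 < M"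
  shows "integral\<^sup>L (PP t k) (\<lambda>x. \<Sum>m\<in>PiE {..<k} (\<lambda>_. {..<M}). indicator (bx t M k m) x *\<^sub>R F m)
         = (\<Sum>m\<in>PiE {..<k} (\<lambda>_. {..<M}). ((t / real M) ^ k) *\<^sub>R F m)"
proof -
  have i: "integrable (PP t k) (\<lambda>x. indicator (bx t M k m) x *\<^sub>R F m)" if "m \<in> PiE {..<k} (\<lambda>_. {..<M})" for m
    using bx_sets[OF t M] bx_emeasure[OF t M that] by (intro integrable_scaleR_left integrable_real_indicator) auto
  have "integral\<^sup>L (PP t k) (\<lambda>x. \<Sum>m\<in>PiE {..<k} (\<lambda>_. {..<M}). indicator (bx t M k m) x *\<^sub>R F m)
      = (\<Sum>m\<in>PiE {..<k} (\<lambda>_. {..<M}). integral\<^sup>L (PP t k) (\<lambda>x. indicator (bx t M k m) x *\<^sub>R F m))"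
    by (rule Bochner_Integration.integral_sum) (rule i)
  also have "\<dots> = (\<Sum>m\<in>PiE {..<k} (\<lambda>_. {..<M}). ((t / real M) ^ k) *\<^sub>R F m)"
  proof (intro sum.cong refl)
    fix m assume m: "m \<in> PiE {..<k} (\<lambda>_. {..<M})"
    have "integral\<^sup>L (PP t k) (\<lambda>x. indicator (bx t M k m) x *\<^sub>R F m) = integral\<^sup>L (PP t k) (indicator (bx t M k m)) *\<^sub>R F m"
      by (rule integral_scaleR_left) (use bx_sets[OF t M] bx_emeasure[OF t M m] in auto)
    also have "\<dots> = measure (PP t k) (bx t M k m) *\<^sub>R F m"
      using bx_sub[of t M k m] by (simp add: Int_absorb2)
    also have "\<dots> = ((t / real M) ^ k) *\<^sub>R F m" using bx_measure[OF t M m] by simp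
    finally show "integral\<^sup>L (PP t k) (\<lambda>x. indicator (bx t M k m) x *\<^sub>R F m) = ((t / real M) ^ k) *\<^sub>R F m" .
  qed
  finally show ?thesis .
qed

lemma step_measurable:
  fixes F :: "(nat \<Rightarrow> nat) \<Rightarrow> 'a::{banach,second_countable_topology}"
  assumes t: "0 < t" and M: "0 < M"
  shows "(\<lambda>x. \<Sum>m\<in>PiE {..<k} (\<lambda>_. {..<M}). indicator (bx t M k m) x *\<^sub>R F m) \<in> borel_measurable (PP t k)"
  using step_integrable[OF t M] by (rule borel_measurable_integrable)

lemma time_ordered_cong: "(\<And>j. j < k \<Longrightarrow> x j = y j) \<Longrightarrow> time_ordered H k x = time_ordered H k y"
proof -
  assume "\<And>j. j < k \<Longrightarrow> x j = y j"
  then have e: "map x [0..<k] = map y [0..<k]" by (intro map_cong) auto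
  show ?thesis unfolding time_ordered_def e ..
qed

definition TT :: "(real \<Rightarrow> complex^'n^'n) \<Rightarrow> real \<Rightarrow> nat \<Rightarrow> nat \<Rightarrow> (nat \<Rightarrow> nat) \<Rightarrow> complex^'n^'n" where
  "TT H t M k m = time_ordered H k (\<lambda>j. real (m j) * (t / real M))"

definition step :: "(real \<Rightarrow> complex^'n^'n) \<Rightarrow> real \<Rightarrow> nat \<Rightarrow> nat \<Rightarrow> (nat \<Rightarrow> real) \<Rightarrow> complex^'n^'n" where
  "step H t M k x = time_ordered H k (\<lambda>j. cf t M (x j))"

lemma step_eq: assumes t: "0 < t" and M: "0 < M" and x: "x \<in> space (PP t k)"
  shows "step H t M k x = (\<Sum>m\<in>PiE {..<k} (\<lambda>_. {..<M}). indicator (bx t M k m) x *\<^sub>R TT H t M k m)"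
proof -
  have "step H t M k x = TT H t M k (ridx t M k x)"
    unfolding step_def TT_def by (rule time_ordered_cong) (simp add: ridx_def cf_def)
  then show ?thesis using step_sum[OF t M x, of "TT H t M k"] by simp
qed

lemma step_int: assumes t: "0 < t" and M: "0 < M"
  shows "integrable (PP t k) (step H t M k)"
    and "integral\<^sup>L (PP t k) (step H t M k) = (\<Sum>m\<in>PiE {..<k} (\<lambda>_. {..<M}). ((t / real M) ^ k) *\<^sub>R TT H t M k m)"
proof -
  have cong: "\<And>x. x \<in> space (PP t k) \<Longrightarrow> (\<Sum>m\<in>PiE {..<k} (\<lambda>_. {..<M}). indicator (bx t M k m) x *\<^sub>R TT H t M k m) = step H t M k x"
    by (simp add: step_eq[OF t M])
  have "integrable (PP t k) (\<lambda>x. \<Sum>m\<in>PiE {..<k} (\<lambda>_. {..<M}). indicator (bx t M k m) x *\<^sub>R TT H t M k m) = integrable (PP t k) (step H t M k)"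
    by (rule Bochner_Integration.integrable_cong) (auto simp: step_eq[OF t M])
  then show "integrable (PP t k) (step H t M k)"
    using step_integrable[OF t M, of k "TT H t M k"] by simp
  have "integral\<^sup>L (PP t k) (step H t M k) = integral\<^sup>L (PP t k) (\<lambda>x. \<Sum>m\<in>PiE {..<k} (\<lambda>_. {..<M}). indicator (bx t M k m) x *\<^sub>R TT H t M k m)"
    by (rule Bochner_Integration.integral_cong) (auto simp: step_eq[OF t M])
  also have "\<dots> = (\<Sum>m\<in>PiE {..<k} (\<lambda>_. {..<M}). ((t / real M) ^ k) *\<^sub>R TT H t M k m)"
    by (rule step_integral[OF t M])
  finally show "integral\<^sup>L (PP t k) (step H t M k) = (\<Sum>m\<in>PiE {..<k} (\<lambda>_. {..<M}). ((t / real M) ^ k) *\<^sub>R TT H t M k m)" .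
qed

lemma cf_tendsto: assumes t: "0 < t" and y: "y \<in> {0..t}"
  shows "(\<lambda>n. cf t (Suc n) y) \<longlonglongrightarrow> y"
proof (rule real_tendsto_sandwich[where f = "\<lambda>n. y - t / real (Suc n)" and h = "\<lambda>n. y"])
  show "\<forall>\<^sub>F n in sequentially. y - t / real (Suc n) \<le> cf t (Suc n) y"
  proof (intro always_eventually allI)
    fix n
    have "y - cf t (Suc n) y \<le> t / real (Suc n)" by (rule cf_props(3)[OF t _ y]) simp
    then show "y - t / real (Suc n) \<le> cf t (Suc n) y" by linarith
  qed
  show "\<forall>\<^sub>F n in sequentially. cf t (Suc n) y \<le> y"
    using cf_props(2)[OF t _ y] by (intro always_eventually allI) simp
  have "(\<lambda>n. t / real (Suc n)) \<longlonglongrightarrow> 0" using LIMSEQ_Suc[OF lim_const_over_n[of t]] by simp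
  then show "(\<lambda>n. y - t / real (Suc n)) \<longlonglongrightarrow> y" using tendsto_diff[OF tendsto_const[of y]] by fastforce
qed simp

lemma T_measurable:
  assumes t: "0 < t" and H: "continuous_on {0..t} H"
  shows "time_ordered H k \<in> borel_measurable (PP t k)"
proof (rule borel_measurable_LIMSEQ_metric[where f = "\<lambda>n. step H t (Suc n) k"])
  fix n
  have "(\<lambda>x. \<Sum>m\<in>PiE {..<k} (\<lambda>_. {..<Suc n}). indicator (bx t (Suc n) k m) x *\<^sub>R TT H t (Suc n) k m) \<in> borel_measurable (PP t k)"
    by (rule step_measurable[OF t]) simp
  then show "step H t (Suc n) k \<in> borel_measurable (PP t k)"
    by (rule measurable_cong[THEN iffD1, rotated]) (simp add: step_eq[OF t])
next
  fix x assume x: "x \<in> space (PP t k)"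
  let ?L = "rev (sort (map x [0..<k]))"
  have L: "y \<in> {0..t}" if "y \<in> set ?L" for y using x that unfolding space_PP by (auto simp: PiE_def Pi_def)
  have e: "step H t (Suc n) k x = mprod (map (H \<circ> cf t (Suc n)) ?L)" for n
    unfolding step_def by (rule time_ordered_mono[OF mono_cf[OF t]])
  have "(\<lambda>n. mprod (map (H \<circ> cf t (Suc n)) ?L)) \<longlonglongrightarrow> mprod (map H ?L)"
  proof (rule tendsto_mprod)
    fix y assume "y \<in> set ?L"
    then have y: "y \<in> {0..t}" by (rule L)
    show "(\<lambda>n. (H \<circ> cf t (Suc n)) y) \<longlonglongrightarrow> H y"
      unfolding o_def
      by (rule continuous_on_tendsto_compose[OF H cf_tendsto[OF t y] y])
         (intro always_eventually allI cf_props(1)[OF t _ y], simp)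
  qed
  then show "(\<lambda>n. step H t (Suc n) k x) \<longlonglongrightarrow> time_ordered H k x"
    unfolding e by (simp add: time_ordered_def)
qed

lemma snorm_T: assumes hb: "\<And>s. s \<in> {0..t} \<Longrightarrow> snorm (H s) \<le> h" and x: "\<And>j. j < k \<Longrightarrow> x j \<in> {0..t}"
  shows "snorm (time_ordered H k x) \<le> h ^ k"
proof -
  have "snorm (mprod (map H (rev (sort (map x [0..<k]))))) \<le> h ^ length (rev (sort (map x [0..<k])))"
    by (rule snorm_mprod) (use hb x in auto)
  then show ?thesis unfolding time_ordered_def by simp
qed

lemma T_integrable:
  fixes H :: "real \<Rightarrow> complex^'n^'n"
  assumes t: "0 < t" and H: "continuous_on {0..t} H" and hb: "\<And>s. s \<in> {0..t} \<Longrightarrow> snorm (H s) \<le> h"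
  shows "integrable (PP t k) (time_ordered H k)"
proof -
  interpret finite_measure "PP t k" by (rule finite_measure_PP) (use t in simp)
  show ?thesis
  proof (rule integrable_const_bound[where B = "real CARD('n)^2 * h ^ k"])
    show "time_ordered H k \<in> borel_measurable (PP t k)" by (rule T_measurable[OF t H])
    show "AE x in PP t k. norm (time_ordered H k x) \<le> real CARD('n)^2 * h ^ k"
    proof (rule AE_I2)
      fix x assume x: "x \<in> space (PP t k)"
      have "snorm (time_ordered H k x) \<le> h ^ k"
        by (rule snorm_T[OF hb]) (use x in \<open>auto simp: space_PP PiE_def Pi_def\<close>)
      then show "norm (time_ordered H k x) \<le> real CARD('n)^2 * h ^ k"
        using norm_le_snorm[of "time_ordered H k x"] by (meson mult_left_mono of_nat_0_le_iff order_trans zero_le_power)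
    qed
  qed
qed


definition AA :: "real \<Rightarrow> nat \<Rightarrow> nat \<Rightarrow> nat \<Rightarrow> nat \<Rightarrow> (nat \<Rightarrow> real) set" where
  "AA t M k j m = PiE {..<k} (\<lambda>i. if i = j then cell t M m else {0..t})"

definition gg :: "real \<Rightarrow> nat \<Rightarrow> nat \<Rightarrow> real \<Rightarrow> (nat \<Rightarrow> real) \<Rightarrow> (nat \<Rightarrow> real) \<Rightarrow> real" where
  "gg t M k h V x = (\<Sum>j<k. \<Sum>m<M. indicator (AA t M k j m) x * (h ^ (k - 1) * V m))"

lemma sp_Mt: "{0..t} \<in> sets (Mt t)"
  using sets.top[of "Mt t"] by simp

lemma AA_sets: assumes "0 < t" "0 < M" shows "AA t M k j m \<in> sets (PP t k)"
  unfolding AA_def by (intro sets_PiM_I_finite) (auto intro: cell_sets[OF assms] sp_Mt)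

lemma AA_sub: "AA t M k j m \<subseteq> space (PP t k)"
  unfolding AA_def space_PP by (rule PiE_mono) (use cell_sub in auto)

lemma AA_measure: assumes t: "0 < t" and M: "0 < M" and j: "j < k" and m: "m < M"
  shows "measure (PP t k) (AA t M k j m) = (t / real M) * t ^ (k - 1)"
proof -
  have "emeasure (PP t k) (AA t M k j m) = (\<Prod>i<k. emeasure (Mt t) (if i = j then cell t M m else {0..t}))"
    unfolding AA_def using t by (intro emeasure_PP) (auto intro: cell_sets[OF t M] sp_Mt)
  also have "\<dots> = (\<Prod>i<k. ennreal (if i = j then t / real M else t))"
    by (intro prod.cong refl) (auto simp: cell_emeasure[OF t M m] emeasure_Mt_space t less_imp_le)
  also have "\<dots> = ennreal (\<Prod>i<k. if i = j then t / real M else t)" by (rule prod_ennreal) (use t in auto)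
  finally have e: "emeasure (PP t k) (AA t M k j m) = ennreal (\<Prod>i<k. if i = j then t / real M else t)" .
  have "(\<Prod>i<k. if i = j then t / real M else t) = (t / real M) * (\<Prod>i\<in>{..<k} - {j}. if i = j then t / real M else t)"
    using j by (subst prod.remove[of _ j]) auto
  also have "(\<Prod>i\<in>{..<k} - {j}. if i = j then t / real M else t) = (\<Prod>i\<in>{..<k} - {j}. t)"
    by (intro prod.cong refl) auto
  also have "\<dots> = t ^ (k - 1)" using j by simp
  finally have p: "(\<Prod>i<k. if i = j then t / real M else t) = (t / real M) * t ^ (k - 1)" .
  have "0 \<le> (t / real M) * t ^ (k - 1)" using t by simp
  then show ?thesis using e p by (simp add: measure_def)
qed

lemma in_AA: assumes t: "0 < t" and M: "0 < M" and x: "x \<in> space (PP t k)" and j: "j < k"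
  shows "x \<in> AA t M k j m \<longleftrightarrow> idx t M (x j) = m"
proof -
  have xs: "\<And>i. i < k \<Longrightarrow> x i \<in> {0..t}" and xe: "x \<in> extensional {..<k}" using x by (auto simp: space_PP PiE_def Pi_def)
  show ?thesis
  proof
    assume "x \<in> AA t M k j m" then show "idx t M (x j) = m" using j by (auto simp: AA_def cell_def PiE_def Pi_def)
  next
    assume "idx t M (x j) = m"
    then show "x \<in> AA t M k j m" using xs xe j by (auto simp: AA_def cell_def PiE_def Pi_def)
  qed
qed

lemma gg_eq: assumes t: "0 < t" and M: "0 < M" and x: "x \<in> space (PP t k)"
  shows "gg t M k h V x = h ^ (k - 1) * (\<Sum>j<k. V (idx t M (x j)))"
proof -
  have xs: "\<And>i. i < k \<Longrightarrow> x i \<in> {0..t}" using x by (auto simp: space_PP PiE_def Pi_def)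
  have "gg t M k h V x = (\<Sum>j<k. h ^ (k - 1) * V (idx t M (x j)))"
    unfolding gg_def
  proof (intro sum.cong refl)
    fix j assume j: "j \<in> {..<k}"
    have "(\<Sum>m<M. indicator (AA t M k j m) x * (h ^ (k - 1) * V m)) = (\<Sum>m<M. if m = idx t M (x j) then h ^ (k - 1) * V m else 0)"
      using j by (intro sum.cong refl) (auto simp: in_AA[OF t M x] indicator_def)
    also have "\<dots> = h ^ (k - 1) * V (idx t M (x j))"
      using idx_bounds(1)[OF t M xs] j by (simp add: sum.delta')
    finally show "(\<Sum>m<M. indicator (AA t M k j m) x * (h ^ (k - 1) * V m)) = h ^ (k - 1) * V (idx t M (x j))" .
  qed
  then show ?thesis by (simp add: sum_distrib_left)
qed

lemma gg_int: assumes t: "0 < t" and M: "0 < M"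
  shows "integrable (PP t k) (gg t M k h V)"
    and "integral\<^sup>L (PP t k) (gg t M k h V) = real k * (t / real M) * t ^ (k - 1) * h ^ (k - 1) * (\<Sum>m<M. V m)"
proof -
  have fin: "emeasure (PP t k) (AA t M k j m) < \<infinity>" for j m
  proof -
    interpret finite_measure "PP t k" by (rule finite_measure_PP) (use t in simp)
    show ?thesis by (simp add: less_top[symmetric])
  qed
  have i1: "integrable (PP t k) (\<lambda>x. indicator (AA t M k j m) x * (h ^ (k - 1) * V m))" for j m
    by (intro integrable_mult_left integrable_real_indicator AA_sets[OF t M] fin)
  show "integrable (PP t k) (gg t M k h V)"
    unfolding gg_def by (intro Bochner_Integration.integrable_sum i1)
  have "integral\<^sup>L (PP t k) (gg t M k h V) = (\<Sum>j<k. \<Sum>m<M. integral\<^sup>L (PP t k) (\<lambda>x. indicator (AA t M k j m) x * (h ^ (k - 1) * V m)))"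
    unfolding gg_def
    by (subst Bochner_Integration.integral_sum, intro Bochner_Integration.integrable_sum i1)
       (intro sum.cong refl Bochner_Integration.integral_sum i1)
  also have "\<dots> = (\<Sum>j<k. \<Sum>m<M. (t / real M) * t ^ (k - 1) * (h ^ (k - 1) * V m))"
  proof (intro sum.cong refl)
    fix j m assume j: "j \<in> {..<k}" and m: "m \<in> {..<M}"
    have "integral\<^sup>L (PP t k) (\<lambda>x. indicator (AA t M k j m) x * (h ^ (k - 1) * V m)) = integral\<^sup>L (PP t k) (indicator (AA t M k j m)) * (h ^ (k - 1) * V m)"
      by (rule Bochner_Integration.integral_mult_left) (intro integrable_real_indicator AA_sets[OF t M] fin)
    also have "\<dots> = (t / real M) * t ^ (k - 1) * (h ^ (k - 1) * V m)"
      using AA_sub[of t M k j m] AA_measure[OF t M] j m by (simp add: Int_absorb2)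
    finally show "integral\<^sup>L (PP t k) (\<lambda>x. indicator (AA t M k j m) x * (h ^ (k - 1) * V m)) = (t / real M) * t ^ (k - 1) * (h ^ (k - 1) * V m)" .
  qed
  also have "\<dots> = (\<Sum>j<k. ((t / real M) * t ^ (k - 1) * h ^ (k - 1)) * (\<Sum>m<M. V m))"
    by (intro sum.cong refl) (simp add: sum_distrib_left mult.assoc)
  also have "\<dots> = real k * (t / real M) * t ^ (k - 1) * h ^ (k - 1) * (\<Sum>m<M. V m)"
    by (simp add: mult_ac)
  finally show "integral\<^sup>L (PP t k) (gg t M k h V) = real k * (t / real M) * t ^ (k - 1) * h ^ (k - 1) * (\<Sum>m<M. V m)" .
qed

lemma pointwise:
  fixes H :: "real \<Rightarrow> complex^'n^'n"
  assumes t: "0 < t" and M: "0 < M" and h0: "0 \<le> h" and hb: "\<And>s. s \<in> {0..t} \<Longrightarrow> snorm (H s) \<le> h"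
    and hV: "\<And>s. s \<in> {0..t} \<Longrightarrow> snorm (H s - H (cf t M s)) \<le> V (idx t M s)"
    and x: "x \<in> space (PP t k)"
  shows "snorm (time_ordered H k x - step H t M k x) \<le> gg t M k h V x"
proof -
  let ?L = "rev (sort (map x [0..<k]))"
  have xs: "\<And>i. i < k \<Longrightarrow> x i \<in> {0..t}" using x by (auto simp: space_PP PiE_def Pi_def)
  have L: "y \<in> {0..t}" if "y \<in> set ?L" for y using xs that by auto
  have "step H t M k x = mprod (map (H \<circ> cf t M) ?L)"
    unfolding step_def by (rule time_ordered_mono[OF mono_cf[OF t]])
  then have "snorm (time_ordered H k x - step H t M k x) = snorm (mprod (map H ?L) - mprod (map (H \<circ> cf t M) ?L))"
    by (simp add: time_ordered_def)
  also have "\<dots> \<le> h ^ (length ?L - 1) * sum_list (map (\<lambda>y. snorm (H y - (H \<circ> cf t M) y)) ?L)"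
    by (rule snorm_mprod_diff) (use L hb cf_props(1)[OF t M] h0 in auto)
  also have "\<dots> = h ^ (k - 1) * (\<Sum>j<k. snorm (H (x j) - (H \<circ> cf t M) (x j)))"
    using sum_list_sort_rev[of "\<lambda>y. snorm (H y - (H \<circ> cf t M) y)" x k]
    by (simp only: length_rev length_sort length_map length_upt diff_zero)
  also have "\<dots> = h ^ (k - 1) * (\<Sum>j<k. snorm (H (x j) - H (cf t M (x j))))" by simp
  also have "\<dots> \<le> h ^ (k - 1) * (\<Sum>j<k. V (idx t M (x j)))"
    using h0 hV xs by (intro mult_left_mono sum_mono) auto
  also have "\<dots> = gg t M k h V x" using gg_eq[OF t M x] by simp
  finally show ?thesis .
qed

lemma per_k:
  fixes H :: "real \<Rightarrow> complex^'n^'n"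
  assumes t: "0 < t" and M: "0 < M" and H: "continuous_on {0..t} H" and h0: "0 \<le> h"
    and hb: "\<And>s. s \<in> {0..t} \<Longrightarrow> snorm (H s) \<le> h"
    and hV: "\<And>s. s \<in> {0..t} \<Longrightarrow> snorm (H s - H (cf t M s)) \<le> V (idx t M s)"
  shows "snorm (Dk H t k - ((t / real M) ^ k) *\<^sub>R Bk H t M k)
     \<le> (1 / fact k) * (real k * (t / real M) * t ^ (k - 1) * h ^ (k - 1) * (\<Sum>m<M. V m)
                        + (t / real M) ^ k * (real k * (real k - 1) / 2 * real M ^ (k - 1)) * h ^ k)"
proof -
  let ?D = "t / real M"
  let ?PE = "PiE {..<k} (\<lambda>_. {..<M})"
  let ?R = "\<Sum>m\<in>?PE - Inj k M. TT H t M k m"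
  let ?T = "time_ordered H k"
  have iT: "integrable (PP t k) ?T" by (rule T_integrable[OF t H hb])
  have iS: "integrable (PP t k) (step H t M k)" by (rule step_int(1)[OF t M])
  have DkT: "integral\<^sup>L (PP t k) ?T = fact k *\<^sub>R Dk H t k"
    unfolding Dk_def by simp
  have finPE: "finite ?PE" by (intro finite_PiE) auto
  have InjPE: "Inj k M \<subseteq> ?PE" by (auto simp: Inj_def)
  have "integral\<^sup>L (PP t k) (step H t M k) = (\<Sum>m\<in>?PE. ?D ^ k *\<^sub>R TT H t M k m)" by (rule step_int(2)[OF t M])
  also have "\<dots> = ?D ^ k *\<^sub>R (\<Sum>m\<in>?PE. TT H t M k m)" by (simp add: scaleR_sum_right)
  also have "(\<Sum>m\<in>?PE. TT H t M k m) = ?R + (\<Sum>m\<in>Inj k M. TT H t M k m)"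
    by (rule sum.subset_diff[OF InjPE finPE])
  also have "(\<Sum>m\<in>Inj k M. TT H t M k m) = fact k *\<^sub>R Bk H t M k"
    unfolding TT_def by (rule Bk_Inj) (use t in simp)
  finally have IS: "integral\<^sup>L (PP t k) (step H t M k) = ?D ^ k *\<^sub>R (?R + fact k *\<^sub>R Bk H t M k)" .
  have fk: "(fact k :: real) \<noteq> 0" by simp
  have key: "Dk H t k - ?D ^ k *\<^sub>R Bk H t M k
      = (1 / fact k) *\<^sub>R (integral\<^sup>L (PP t k) (\<lambda>x. ?T x - step H t M k x)) + ((1 / fact k) * ?D ^ k) *\<^sub>R ?R"
  proof -
    let ?Y = "integral\<^sup>L (PP t k) (\<lambda>x. ?T x - step H t M k x)"
    have Y: "?Y = fact k *\<^sub>R Dk H t k - ?D ^ k *\<^sub>R (?R + fact k *\<^sub>R Bk H t M k)"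
      using iT iS DkT IS by simp
    have "fact k *\<^sub>R (Dk H t k - ?D ^ k *\<^sub>R Bk H t M k) = ?Y + ?D ^ k *\<^sub>R ?R"
      unfolding Y by (simp add: algebra_simps)
    moreover have "Dk H t k - ?D ^ k *\<^sub>R Bk H t M k = (1 / fact k) *\<^sub>R (fact k *\<^sub>R (Dk H t k - ?D ^ k *\<^sub>R Bk H t M k))"
      using fk by simp
    ultimately have "Dk H t k - ?D ^ k *\<^sub>R Bk H t M k = (1 / fact k) *\<^sub>R (?Y + ?D ^ k *\<^sub>R ?R)" by simp
    then show ?thesis by (simp add: scaleR_add_right)
  qed
  have b1: "snorm (integral\<^sup>L (PP t k) (\<lambda>x. ?T x - step H t M k x)) \<le> real k * ?D * t ^ (k - 1) * h ^ (k - 1) * (\<Sum>m<M. V m)"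
  proof -
    have "snorm (integral\<^sup>L (PP t k) (\<lambda>x. ?T x - step H t M k x)) \<le> integral\<^sup>L (PP t k) (gg t M k h V)"
      by (rule snorm_integral_le) (use iT iS gg_int(1)[OF t M] pointwise[OF t M h0 hb hV] in auto)
    then show ?thesis using gg_int(2)[OF t M] by simp
  qed
  have b2: "snorm ?R \<le> real (card (?PE - Inj k M)) * h ^ k"
  proof -
    have "snorm ?R \<le> (\<Sum>m\<in>?PE - Inj k M. snorm (TT H t M k m))" by (rule snorm_sum)
    also have "\<dots> \<le> (\<Sum>m\<in>?PE - Inj k M. h ^ k)"
    proof (intro sum_mono)
      fix m assume m: "m \<in> ?PE - Inj k M"
      have "real (m j) * ?D \<in> {0..t}" if "j < k" for j
      proof -
        have "m j < M" using m that by (auto simp: PiE_def Pi_def)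
        then have "real (m j) \<le> real M" by simp
        then have "real (m j) * ?D \<le> real M * ?D" using t M by (intro mult_right_mono) auto
        then show ?thesis using t M by auto
      qed
      then show "snorm (TT H t M k m) \<le> h ^ k" unfolding TT_def by (intro snorm_T[OF hb]) auto
    qed
    also have "\<dots> = real (card (?PE - Inj k M)) * h ^ k" by simp
    finally show ?thesis .
  qed
  have "snorm (Dk H t k - ?D ^ k *\<^sub>R Bk H t M k)
      \<le> snorm ((1 / fact k) *\<^sub>R (integral\<^sup>L (PP t k) (\<lambda>x. ?T x - step H t M k x))) + snorm (((1 / fact k) * ?D ^ k) *\<^sub>R ?R)"
    unfolding key by (rule snorm_add)
  also have "\<dots> \<le> (1 / fact k) * snorm (integral\<^sup>L (PP t k) (\<lambda>x. ?T x - step H t M k x)) + ((1 / fact k) * ?D ^ k) * snorm ?R"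
  proof (rule add_mono)
    have n1: "0 \<le> 1 / (fact k :: real)" by simp
    show "snorm ((1 / fact k) *\<^sub>R (integral\<^sup>L (PP t k) (\<lambda>x. ?T x - step H t M k x))) \<le> (1 / fact k) * snorm (integral\<^sup>L (PP t k) (\<lambda>x. ?T x - step H t M k x))"
      using snorm_scaleR[of "1 / fact k" "integral\<^sup>L (PP t k) (\<lambda>x. ?T x - step H t M k x)"] abs_of_nonneg[OF n1] by simp
    have n2: "0 \<le> (1 / fact k) * ?D ^ k" using t M by simp
    show "snorm (((1 / fact k) * ?D ^ k) *\<^sub>R ?R) \<le> ((1 / fact k) * ?D ^ k) * snorm ?R"
      using snorm_scaleR[of "(1 / fact k) * ?D ^ k" ?R] abs_of_nonneg[OF n2] by simp
  qed
  also have "\<dots> \<le> (1 / fact k) * (real k * ?D * t ^ (k - 1) * h ^ (k - 1) * (\<Sum>m<M. V m)) + ((1 / fact k) * ?D ^ k) * (real (card (?PE - Inj k M)) * h ^ k)"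
    using t M by (intro add_mono mult_left_mono b1 b2) auto
  also have "\<dots> \<le> (1 / fact k) * (real k * ?D * t ^ (k - 1) * h ^ (k - 1) * (\<Sum>m<M. V m)) + ((1 / fact k) * ?D ^ k) * ((real k * (real k - 1) / 2 * real M ^ (k - 1)) * h ^ k)"
    using t M h0 card_noninj[of k M] by (intro add_mono mult_left_mono mult_right_mono order_refl) auto
  also have "\<dots> = (1 / fact k) * (real k * ?D * t ^ (k - 1) * h ^ (k - 1) * (\<Sum>m<M. V m)
                        + ?D ^ k * (real k * (real k - 1) / 2 * real M ^ (k - 1)) * h ^ k)"
    by (simp add: algebra_simps)
  finally show ?thesis .
qed


lemma ftc_snorm:
  fixes H :: "real \<Rightarrow> complex^'n^'n"
  assumes dif: "H differentiable_on {0..t}"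
    and int: "(\<lambda>s. snorm (vector_derivative H (at s within {0..t}))) integrable_on {0..t}"
    and ab: "0 \<le> a" "a \<le> b" "b \<le> t"
  shows "snorm (H b - H a) \<le> integral {a..b} (\<lambda>s. snorm (vector_derivative H (at s within {0..t})))"
proof -
  let ?D = "\<lambda>s. vector_derivative H (at s within {0..t})"
  let ?\<phi> = "\<lambda>s. snorm (?D s)"
  have sub: "{a..b} \<subseteq> {0..t}" using ab by auto
  have ii: "?\<phi> integrable_on {a..b}" by (rule integrable_subinterval_real[OF int sub])
  have hd: "(H has_vector_derivative ?D u) (at u within {a..b})" if "u \<in> {a..b}" for u
  proof -
    have "H differentiable (at u within {0..t})" using dif that sub by (auto simp: differentiable_on_def)
    then have "(H has_vector_derivative ?D u) (at u within {0..t})" by (simp add: vector_derivative_works)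
    then show ?thesis by (rule has_vector_derivative_within_subset[OF _ sub])
  qed
  have fi: "(?D has_integral (H b - H a)) {a..b}" by (rule fundamental_theorem_of_calculus[OF ab(2) hd])
  show ?thesis
  proof (rule snorm_le)
    show "0 \<le> integral {a..b} ?\<phi>" by (rule integral_nonneg[OF ii]) (simp add: snorm_ge0)
    fix v :: "complex^'n"
    have hv: "((\<lambda>s. ?D s *v v) has_integral ((H b - H a) *v v)) {a..b}"
      using has_integral_linear[OF fi bl_mv[of v]] by (simp add: o_def)
    have "norm ((H b - H a) *v v) = norm (integral {a..b} (\<lambda>s. ?D s *v v))"
      using hv by (simp add: integral_unique)
    also have "\<dots> \<le> integral {a..b} (\<lambda>s. ?\<phi> s * norm v)"
    proof (rule integral_norm_bound_integral)
      show "(\<lambda>s. ?D s *v v) integrable_on {a..b}" using hv by blast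
      show "(\<lambda>s. ?\<phi> s * norm v) integrable_on {a..b}" by (rule integrable_on_mult_left[OF ii])
      fix s assume "s \<in> {a..b}"
      show "norm (?D s *v v) \<le> ?\<phi> s * norm v" by (rule snorm_vec)
    qed
    also have "\<dots> = integral {a..b} ?\<phi> * norm v"
      using integral_mult[OF ii, of "norm v"] by (simp add: mult.commute)
    finally show "norm ((H b - H a) *v v) \<le> integral {a..b} ?\<phi> * norm v" .
  qed
qed

lemma V_bound:
  fixes H :: "real \<Rightarrow> complex^'n^'n"
  assumes t: "0 < t" and M: "0 < M" and dif: "H differentiable_on {0..t}"
    and int: "(\<lambda>s. snorm (vector_derivative H (at s within {0..t}))) integrable_on {0..t}"
    and s: "s \<in> {0..t}"
  shows "snorm (H s - H (cf t M s)) \<le> integral {real (idx t M s) * (t / real M) .. real (Suc (idx t M s)) * (t / real M)} (\<lambda>s. snorm (vector_derivative H (at s within {0..t})))"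
proof -
  let ?\<phi> = "\<lambda>s. snorm (vector_derivative H (at s within {0..t}))"
  let ?a = "real (idx t M s) * (t / real M)" and ?b = "real (Suc (idx t M s)) * (t / real M)"
  note b = idx_bounds[OF t M s]
  have a0: "0 \<le> ?a" using t M by simp
  have bt: "?b \<le> t"
  proof -
    have "real (Suc (idx t M s)) \<le> real M" using b(1) by simp
    then have "?b \<le> real M * (t / real M)" using t M by (intro mult_right_mono) auto
    then show ?thesis using M by simp
  qed
  have "snorm (H s - H (cf t M s)) \<le> integral {?a..s} ?\<phi>"
    unfolding cf_def by (rule ftc_snorm[OF dif int a0 b(2)]) (use s in auto)
  also have "\<dots> \<le> integral {?a..?b} ?\<phi>"
  proof -
    have iab: "?\<phi> integrable_on {?a..?b}" by (rule integrable_subinterval_real[OF int]) (use a0 bt in auto)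
    have "integral {?a..s} ?\<phi> + integral {s..?b} ?\<phi> = integral {?a..?b} ?\<phi>"
      by (rule Henstock_Kurzweil_Integration.integral_combine[OF b(2) b(3) iab])
    moreover have "0 \<le> integral {s..?b} ?\<phi>"
      by (rule integral_nonneg) (rule integrable_subinterval_real[OF iab], use b in auto, simp add: snorm_ge0)
    ultimately show ?thesis by linarith
  qed
  finally show ?thesis .
qed

lemma V_sum:
  fixes \<phi> :: "real \<Rightarrow> real"
  assumes t: "0 < t" and M: "0 < M" and int: "\<phi> integrable_on {0..t}"
  shows "(\<Sum>m<M. integral {real m * (t / real M) .. real (Suc m) * (t / real M)} \<phi>) = integral {0..t} \<phi>"
proof -
  have "n \<le> M \<Longrightarrow> (\<Sum>m<n. integral {real m * (t / real M) .. real (Suc m) * (t / real M)} \<phi>) = integral {0 .. real n * (t / real M)} \<phi>" for n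
  proof (induction n)
    case 0 then show ?case by simp
  next
    case (Suc n)
    have le: "real (Suc n) * (t / real M) \<le> t"
    proof -
      have "real (Suc n) * (t / real M) \<le> real M * (t / real M)" using Suc.prems t M by (intro mult_right_mono) auto
      then show ?thesis using M by simp
    qed
    have "(\<Sum>m<Suc n. integral {real m * (t / real M) .. real (Suc m) * (t / real M)} \<phi>)
        = integral {0 .. real n * (t / real M)} \<phi> + integral {real n * (t / real M) .. real (Suc n) * (t / real M)} \<phi>"
      using Suc by simp
    also have "\<dots> = integral {0 .. real (Suc n) * (t / real M)} \<phi>"
    proof (rule Henstock_Kurzweil_Integration.integral_combine)
      show "0 \<le> real n * (t / real M)" using t M by simp
      show "real n * (t / real M) \<le> real (Suc n) * (t / real M)" using t M by (intro mult_right_mono) auto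
      show "\<phi> integrable_on {0..real (Suc n) * (t / real M)}" by (rule integrable_subinterval_real[OF int]) (use le in auto)
    qed
    finally show ?case .
  qed
  from this[of M] show ?thesis using M by simp
qed


lemma bk_A: fixes t m h I :: real assumes "0 < m"
  shows "(1 / fact (Suc (Suc j))) * (real (Suc (Suc j)) * (t/m) * t^(Suc j) * h^(Suc j) * I) = (t/m)*I*((h*t)^(Suc j)/fact (Suc j))"
proof -
  have f: "(fact (Suc (Suc j)) :: real) = real (Suc (Suc j)) * fact (Suc j)" by (rule fact_Suc)
  have p: "(h*t)^(Suc j) = h^(Suc j) * t^(Suc j)" by (rule power_mult_distrib)
  show ?thesis unfolding f p using assms by (simp add: field_simps del: of_nat_Suc fact_Suc)
qed

lemma bk_B: fixes t m h :: real assumes "0 < m"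
  shows "(1 / fact (Suc (Suc j))) * ((t/m)^(Suc (Suc j)) * (real (Suc (Suc j)) * (real (Suc (Suc j)) - 1)/2 * m^(Suc j)) * h^(Suc (Suc j))) = (t^2*h^2/(2*m)) * ((h*t)^j/fact j)"
proof -
  have f: "(fact (Suc (Suc j)) :: real) = real (Suc (Suc j)) * (real (Suc j) * fact j)" by simp
  have p: "(h*t)^j = h^j * t^j" by (rule power_mult_distrib)
  have q: "(t/m)^(Suc (Suc j)) = t^(Suc (Suc j)) / (m * m^(Suc j))" by (simp add: power_divide)
  have r: "real (Suc (Suc j)) - 1 = real (Suc j)" by simp
  show ?thesis unfolding f p q r using assms by (simp add: field_simps power2_eq_square del: of_nat_Suc fact_Suc)
qed

lemma bk_le: fixes t m h I :: real assumes m: "0 < m"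
  shows "(1 / fact k) * (real k * (t / m) * t ^ (k - 1) * h ^ (k - 1) * I + (t / m) ^ k * (real k * (real k - 1) / 2 * m ^ (k - 1)) * h ^ k)
    \<le> (t/m) * I * (if k = 0 then 0 else (h*t)^(k-1)/fact (k-1)) + (t^2*h^2/(2*m)) * (if k < 2 then 0 else (h*t)^(k-2)/fact (k-2))"
proof (cases k)
  case 0 then show ?thesis by simp
next
  case (Suc k')
  show ?thesis
  proof (cases k')
    case 0 then show ?thesis using Suc by simp
  next
    case (Suc j)
    have kk: "k = Suc (Suc j)" using Suc \<open>k = Suc k'\<close> by simp
    have "(1 / fact k) * (real k * (t / m) * t ^ (k - 1) * h ^ (k - 1) * I + (t / m) ^ k * (real k * (real k - 1) / 2 * m ^ (k - 1)) * h ^ k)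
      = (1 / fact (Suc (Suc j))) * (real (Suc (Suc j)) * (t/m) * t^(Suc j) * h^(Suc j) * I)
        + (1 / fact (Suc (Suc j))) * ((t/m)^(Suc (Suc j)) * (real (Suc (Suc j)) * (real (Suc (Suc j)) - 1)/2 * m^(Suc j)) * h^(Suc (Suc j)))"
      unfolding kk by (simp only: distrib_left diff_Suc_1)
    also have "\<dots> = (t/m)*I*((h*t)^(Suc j)/fact (Suc j)) + (t^2*h^2/(2*m)) * ((h*t)^j/fact j)"
      by (simp only: bk_A[OF m] bk_B[OF m])
    also have "\<dots> = (t/m) * I * (if k = 0 then 0 else (h*t)^(k-1)/fact (k-1)) + (t^2*h^2/(2*m)) * (if k < 2 then 0 else (h*t)^(k-2)/fact (k-2))"
      unfolding kk by simp
    finally show ?thesis by simp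
  qed
qed

lemma sum_u: "(\<Sum>k=0..K. (if k = 0 then 0 else (x::real)^(k-1)/fact (k-1))) = (\<Sum>j<K. x^j/fact j)"
  by (induction K) auto

lemma sum_w: "(\<Sum>k=0..K. (if k < 2 then 0 else (x::real)^(k-2)/fact (k-2))) = (\<Sum>j<K-1. x^j/fact j)"
proof (induction K)
  case 0 then show ?case by simp
next
  case (Suc K)
  show ?case
  proof (cases K)
    case 0 then show ?thesis by simp
  next
    case (Suc K')
    then show ?thesis using Suc.IH by simp
  qed
qed

lemma Dk0: "Dk H t 0 = mat 1"
proof -
  have sp: "space (PiM {} (\<lambda>_::nat. restrict_space lborel {0..t})) = {\<lambda>_. undefined}" by (simp add: space_PiM)
  have "measure (PiM {} (\<lambda>_::nat. restrict_space lborel {0..t})) {\<lambda>_. undefined} = 1"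
    by (simp add: measure_def)
  then show ?thesis unfolding Dk_def time_ordered_def mprod_def by (simp add: sp)
qed

lemma Bk0: "Bk H t M 0 = mat 1"
proof -
  have "{S. S \<subseteq> {..<M} \<and> card S = 0} = {{}}"
    by (auto dest: finite_subset[OF _ finite_lessThan])
  then show ?thesis unfolding Bk_def mprod_def by simp
qed

lemma cscale_diff: fixes A B :: "complex^'n^'n" shows "cscale c A - cscale c B = cscale c (A - B)"
  by (simp add: cscale_def vec_eq_iff right_diff_distrib)

lemma cscale_scaleR: fixes B :: "complex^'n^'n" shows "cscale (c * complex_of_real r) B = cscale c (r *\<^sub>R B)"
proof -
  have "\<forall>i j. (cscale (c * complex_of_real r) B)$i$j = (cscale c (r *\<^sub>R B))$i$j"
    by (simp add: cscale_def) (simp add: scaleR_conv_of_real)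
  then show ?thesis by (simp add: vec_eq_iff)
qed

theorem lemma5:
  fixes H :: "real \<Rightarrow> complex^'n^'n" and t \<epsilon>2 :: real and K M :: nat
  assumes "t > 0"
    and "H differentiable_on {0..t}"
    and "(\<lambda>s. snorm (vector_derivative H (at s within {0..t}))) integrable_on {0..t}"
    and "\<epsilon>2 > 0"
    and "real M \<ge> t^2 / \<epsilon>2 * 4 * exp ((SUP s\<in>{0..t}. snorm (H s)) * t) *
           ((1 / t) * integral {0..t} (\<lambda>s. snorm (vector_derivative H (at s within {0..t})))
            + (SUP s\<in>{0..t}. snorm (H s))^2)"
    and "M \<ge> K^2"
  shows "snorm ((\<Sum>k=0..K. cscale ((-\<i>)^k) (Dk H t k))
              - (\<Sum>k=0..K. cscale ((-\<i> * complex_of_real (t / real M))^k) (Bk H t M k))) \<le> \<epsilon>2"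
proof -
  note t = assms(1) and dif = assms(2) and int = assms(3) and e2 = assms(4) and MA = assms(5) and MK = assms(6)
  define \<phi> where "\<phi> s = snorm (vector_derivative H (at s within {0..t}))" for s
  define h where "h = (SUP s\<in>{0..t}. snorm (H s))"
  define I where "I = integral {0..t} \<phi>"
  have int': "\<phi> integrable_on {0..t}" using int by (simp add: \<phi>_def[abs_def])
  have cont: "continuous_on {0..t} H" by (rule differentiable_imp_continuous_on[OF dif])
  have "bounded (H ` {0..t})" by (intro compact_imp_bounded compact_continuous_image cont compact_Icc)
  then obtain B where B0: "\<forall>x\<in>H ` {0..t}. norm x \<le> B" unfolding bounded_iff by blast
  have B: "\<And>s. s \<in> {0..t} \<Longrightarrow> norm (H s) \<le> B" using B0 by blast
  have bdd: "bdd_above ((\<lambda>s. snorm (H s)) ` {0..t})"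
  proof (rule bdd_aboveI2)
    fix s assume "s \<in> {0..t}"
    then show "snorm (H s) \<le> real CARD('n)^2 * B"
      using snorm_le_norm[of "H s"] B[of s] by (meson mult_left_mono of_nat_0_le_iff order_trans zero_le_power)
  qed
  have hb: "\<And>s. s \<in> {0..t} \<Longrightarrow> snorm (H s) \<le> h" unfolding h_def by (rule cSUP_upper[OF _ bdd])
  have h0: "0 \<le> h" using hb[of 0] snorm_ge0[of "H 0"] t by simp
  have I0: "0 \<le> I" unfolding I_def by (rule integral_nonneg[OF int']) (simp add: \<phi>_def snorm_ge0)
  show ?thesis
  proof (cases "M = 0")
    case True
    then have "K = 0" using MK by simp
    then show ?thesis using e2 True by (simp add: Dk0 Bk0 snorm_zero)
  next
    case False
    then have M: "0 < M" by simp
    let ?D = "t / real M"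
    define V where "V m = integral {real m * ?D .. real (Suc m) * ?D} \<phi>" for m
    have hV: "\<And>s. s \<in> {0..t} \<Longrightarrow> snorm (H s - H (cf t M s)) \<le> V (idx t M s)"
      unfolding V_def \<phi>_def by (rule V_bound[OF t M dif int])
    have SV: "(\<Sum>m<M. V m) = I" unfolding V_def I_def by (rule V_sum[OF t M int'])
    let ?E = "\<lambda>k. Dk H t k - (?D ^ k) *\<^sub>R Bk H t M k"
    let ?u = "\<lambda>k. (if k = 0 then 0 else (h*t)^(k-1)/fact (k-1))"
    let ?w = "\<lambda>k. (if k < 2 then 0 else (h*t)^(k-2)/fact (k-2))"
    let ?c = "t^2*h^2/(2*real M)"
    have eq: "(\<Sum>k=0..K. cscale ((-\<i>)^k) (Dk H t k)) - (\<Sum>k=0..K. cscale ((-\<i> * complex_of_real ?D)^k) (Bk H t M k))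
        = (\<Sum>k=0..K. cscale ((-\<i>)^k) (?E k))"
    proof -
      have "\<And>k. cscale ((-\<i> * complex_of_real ?D)^k) (Bk H t M k) = cscale ((-\<i>)^k) ((?D ^ k) *\<^sub>R Bk H t M k)"
        by (simp only: power_mult_distrib of_real_power[symmetric] cscale_scaleR)
      then show ?thesis by (simp add: sum_subtractf[symmetric] cscale_diff)
    qed
    have "snorm (\<Sum>k=0..K. cscale ((-\<i>)^k) (?E k)) \<le> (\<Sum>k=0..K. snorm (cscale ((-\<i>)^k) (?E k)))"
      by (rule snorm_sum)
    also have "\<dots> \<le> (\<Sum>k=0..K. snorm (?E k))"
    proof (rule sum_mono)
      fix k
      have "snorm (cscale ((-\<i>)^k) (?E k)) \<le> cmod ((-\<i>)^k) * snorm (?E k)" by (rule snorm_cscale)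
      also have "cmod ((-\<i>)^k) = 1" by (simp add: norm_power)
      finally show "snorm (cscale ((-\<i>)^k) (?E k)) \<le> snorm (?E k)" by simp
    qed
    also have "\<dots> \<le> (\<Sum>k=0..K. ?D * I * ?u k + ?c * ?w k)"
    proof (rule sum_mono)
      fix k
      have "snorm (?E k) \<le> (1 / fact k) * (real k * ?D * t ^ (k - 1) * h ^ (k - 1) * (\<Sum>m<M. V m)
                        + ?D ^ k * (real k * (real k - 1) / 2 * real M ^ (k - 1)) * h ^ k)"
        by (rule per_k[OF t M cont h0 hb hV])
      also have "\<dots> \<le> ?D * I * ?u k + ?c * ?w k"
        unfolding SV using bk_le[of "real M" k t h I] M by simp
      finally show "snorm (?E k) \<le> ?D * I * ?u k + ?c * ?w k" .
    qed
    also have "\<dots> = ?D * I * (\<Sum>k=0..K. ?u k) + ?c * (\<Sum>k=0..K. ?w k)"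
      by (simp add: sum.distrib sum_distrib_left)
    also have "\<dots> = ?D * I * (\<Sum>j<K. (h*t)^j/fact j) + ?c * (\<Sum>j<K-1. (h*t)^j/fact j)"
      by (simp only: sum_u sum_w)
    also have "\<dots> \<le> ?D * I * exp (h*t) + ?c * exp (h*t)"
    proof (intro add_mono mult_left_mono sum_exp_le)
      show "0 \<le> h * t" using h0 t by simp
      show "0 \<le> h * t" using h0 t by simp
      show "0 \<le> ?D * I" using t M I0 by simp
      show "0 \<le> ?c" using t M by simp
    qed
    also have "\<dots> \<le> \<epsilon>2"
    proof -
      let ?e = "exp (h * t)"
      have MA': "real M \<ge> t^2 / \<epsilon>2 * 4 * ?e * ((1 / t) * I + h^2)"
        using MA unfolding h_def I_def \<phi>_def by simp
      have "\<epsilon>2 * real M \<ge> \<epsilon>2 * (t^2 / \<epsilon>2 * 4 * ?e * ((1 / t) * I + h^2))"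
        using MA' e2 by (intro mult_left_mono) auto
      also have "\<epsilon>2 * (t^2 / \<epsilon>2 * 4 * ?e * ((1 / t) * I + h^2)) = 4 * ?e * (t * I + t^2 * h^2)"
        using e2 t by (simp add: field_simps power2_eq_square)
      finally have A: "4 * ?e * (t * I + t^2 * h^2) \<le> \<epsilon>2 * real M" .
      have tI: "0 \<le> t * I" using t I0 by simp
      have th: "0 \<le> t^2 * h^2" by simp
      have gen: "\<And>a b::real. 0 \<le> a \<Longrightarrow> 0 \<le> b \<Longrightarrow> a + b / 2 \<le> 4 * (a + b)" by (simp add: distrib_left)
      have "t * I + t^2 * h^2 / 2 \<le> 4 * (t * I + t^2 * h^2)" by (rule gen[OF tI th])
      then have "?e * (t * I + t^2 * h^2 / 2) \<le> ?e * (4 * (t * I + t^2 * h^2))" by (intro mult_left_mono) auto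
      also have "\<dots> = 4 * ?e * (t * I + t^2 * h^2)" by (simp only: mult_ac)
      also have "\<dots> \<le> \<epsilon>2 * real M" by (rule A)
      finally have B: "?e * (t * I + t^2 * h^2 / 2) \<le> \<epsilon>2 * real M" .
      have "?D * I * ?e + ?c * ?e = ?e * (t * I + t^2 * h^2 / 2) / real M"
        using M by (simp add: field_simps)
      also have "\<dots> \<le> \<epsilon>2 * real M / real M" using B M by (intro divide_right_mono) auto
      also have "\<dots> = \<epsilon>2" using M by simp
      finally show ?thesis .
    qed
    finally show ?thesis unfolding eq .
  qed
qed


end
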